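(* Let $W$ be a $\mathcal{T}$-module such that the restriction of $W$ to $\mathcal{U}(\mathfrak{t})$, where $\mathfrak{t}=\mathbb{C}L_0$, is free of rank $2$. Then there exist $\lambda\in\mathbb{C}^*$ and $\alpha\in\mathbb{C}$ such that $W$ or $\Pi(W)$ is isomorphic to $\mathcal{N}_1(\lambda,\alpha)$ or to $\mathcal{N}_{-1}(\lambda,\alpha)$.
   Context: The twisted $N=2$ superconformal algebra $\mathcal{T}$ is the Lie superalgebra over $\mathbb{C}$ with basis $\{L_m, I_r, G_p\mid m\in\mathbb{Z}, r\in\frac12+\mathbb{Z}, p\in\frac12\mathbb{Z}\}$, even part spanned by the $L_m,I_r$, odd part by the $G_p$, only nonzero brackets $[L_m,L_n]=(m-n)L_{m+n}$, $[L_m,I_r]=-rI_{m+r}$, $[L_m,G_p]=(\frac m2-p)G_{m+p}$, $[I_r,G_p]=G_{r+p}$, $[G_p,G_q]=(-1)^{2p}2L_{p+q}$ if $p+q\in\mathbb{Z}$, $[G_p,G_q]=(-1)^{2p+1}(p-q)I_{p+q}$ if $p+q\in\frac12+\mathbb{Z}$. Modules are $\mathbb{Z}_2$-graded; $\Pi$ is the parity-change functor. For $p\in\frac12\mathbb{Z}$, $\lambda^p$ means $(\lambda^{1/2})^{2p}$ for a fixed square root. For $\lambda\in\mathbb{C}^*,\alpha\in\mathbb{C},t=\pm1$, $\mathcal{N}_t(\lambda,\alpha)$ is the space $\mathbb{C}[x]\mathbf{1}_{\bar0}\oplus\mathbb{C}[y]\mathbf{1}_{\bar1}$ (even part $\mathbb{C}[x]\mathbf{1}_{\bar0}$,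 odd part $\mathbb{C}[y]\mathbf{1}_{\bar1}$; write $f(x)$ for $f(x)\mathbf{1}_{\bar0}$, $g(y)$ for $g(y)\mathbf{1}_{\bar1}$) with $L_mf(x)=\lambda^m(x+m\alpha)f(x+m)$, $L_mg(y)=\lambda^m(y+m(\alpha+\frac12))g(y+m)$, $I_rf(x)=-2t^{2r}\lambda^r\alpha f(x+r)$, $I_rg(y)=t^{2r}\lambda^r(1-2\alpha)g(y+r)$, $G_pf(x)=t^{2p}\lambda^pf(y+p)$, $G_pg(y)=(-t)^{2p}\lambda^p(x+2p\alpha)g(x+p)$, for $m\in\mathbb{Z}$, $r\in\frac12+\mathbb{Z}$, $p\in\frac12\mathbb{Z}$. *)

theory Defs
  imports Complex_Main "HOL-Library.Product_Plus" "HOL-Computational_Algebra.Polynomial"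
begin

(* Index convention: half-integer indices are encoded by their doubles.
   I k (k odd) stands for I_{k/2};  G k (k any integer) stands for G_{k/2}.
   L m (m integer) stands for L_m. *)

(* Relations (bracket = supercommutator):
   [L_m,L_n]=(m-n)L_{m+n}; [L_m,I_r]=-r I_{m+r}; [L_m,G_p]=(m/2-p)G_{m+p};
   [I_r,I_s]=0; [I_r,G_p]=G_{r+p};
   G_pG_q+G_qG_p = (-1)^{2p} 2 L_{p+q} (p+q integral),
                 = (-1)^{2p+1}(p-q) I_{p+q} (p+q half-odd). *)
definition tmod ::
  "(complex \<Rightarrow> 'v::ab_group_add \<Rightarrow> 'v) \<Rightarrow> 'v set \<Rightarrow> 'v set \<Rightarrow>
   (int \<Rightarrow> 'v \<Rightarrow> 'v) \<Rightarrow> (int \<Rightarrow> 'v \<Rightarrow> 'v) \<Rightarrow> (int \<Rightarrow> 'v \<Rightarrow> 'v) \<Rightarrow> bool" where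
  "tmod sc V0 V1 L I G \<longleftrightarrow>
     vector_space sc \<and>
     module.subspace sc V0 \<and> module.subspace sc V1 \<and> V0 \<inter> V1 = {0} \<and>
     (\<forall>v. \<exists>a\<in>V0. \<exists>b\<in>V1. v = a + b) \<and>
     (\<forall>m. Vector_Spaces.linear sc sc (L m)) \<and>
     (\<forall>k. odd k \<longrightarrow> Vector_Spaces.linear sc sc (I k)) \<and>
     (\<forall>k. Vector_Spaces.linear sc sc (G k)) \<and>
     (\<forall>m. L m ` V0 \<subseteq> V0 \<and> L m ` V1 \<subseteq> V1) \<and>
     (\<forall>k. odd k \<longrightarrow> I k ` V0 \<subseteq> V0 \<and> I k ` V1 \<subseteq> V1) \<and>
     (\<forall>k. G k ` V0 \<subseteq> V1 \<and> G k ` V1 \<subseteq> V0) \<and>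
     (\<forall>m n v. L m (L n v) - L n (L m v) = sc (of_int (m - n)) (L (m + n) v)) \<and>
     (\<forall>m k v. odd k \<longrightarrow>
        L m (I k v) - I k (L m v) = sc (- of_int k / 2) (I (2 * m + k) v)) \<and>
     (\<forall>m k v. L m (G k v) - G k (L m v) = sc (of_int (m - k) / 2) (G (2 * m + k) v)) \<and>
     (\<forall>j k v. odd j \<longrightarrow> odd k \<longrightarrow> I j (I k v) - I k (I j v) = 0) \<and>
     (\<forall>j k v. odd j \<longrightarrow> I j (G k v) - G k (I j v) = G (j + k) v) \<and>
     (\<forall>j k v. even (j + k) \<longrightarrow>
        G j (G k v) + G k (G j v) = sc ((-1) powi j * 2) (L ((j + k) div 2) v)) \<and>
     (\<forall>j k v. odd (j + k) \<longrightarrow>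
        G j (G k v) + G k (G j v) =
          sc ((-1) powi (j + 1) * (of_int (j - k) / 2)) (I (j + k) v))"

definition tiso ::
  "(complex \<Rightarrow> 'v::ab_group_add \<Rightarrow> 'v) \<Rightarrow> 'v set \<Rightarrow> 'v set \<Rightarrow>
   (int \<Rightarrow> 'v \<Rightarrow> 'v) \<Rightarrow> (int \<Rightarrow> 'v \<Rightarrow> 'v) \<Rightarrow> (int \<Rightarrow> 'v \<Rightarrow> 'v) \<Rightarrow>
   (complex \<Rightarrow> 'w::ab_group_add \<Rightarrow> 'w) \<Rightarrow> 'w set \<Rightarrow> 'w set \<Rightarrow>
   (int \<Rightarrow> 'w \<Rightarrow> 'w) \<Rightarrow> (int \<Rightarrow> 'w \<Rightarrow> 'w) \<Rightarrow> (int \<Rightarrow> 'w \<Rightarrow> 'w) \<Rightarrow> bool" where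
  "tiso sc V0 V1 L I G sc' W0 W1 L' I' G' \<longleftrightarrow>
     (\<exists>\<phi>. Vector_Spaces.linear sc sc' \<phi> \<and> bij \<phi> \<and>
        \<phi> ` V0 = W0 \<and> \<phi> ` V1 = W1 \<and>
        (\<forall>m v. \<phi> (L m v) = L' m (\<phi> v)) \<and>
        (\<forall>k v. odd k \<longrightarrow> \<phi> (I k v) = I' k (\<phi> v)) \<and>
        (\<forall>k v. \<phi> (G k v) = G' k (\<phi> v)))"

definition polyact :: "(complex \<Rightarrow> 'v::ab_group_add \<Rightarrow> 'v) \<Rightarrow> ('v \<Rightarrow> 'v) \<Rightarrow> complex poly \<Rightarrow> 'v \<Rightarrow> 'v" where
  "polyact sc A p v = (\<Sum>i\<le>degree p. sc (coeff p i) ((A ^^ i) v))"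

definition free_rank2_L0 :: "(complex \<Rightarrow> 'v::ab_group_add \<Rightarrow> 'v) \<Rightarrow> (int \<Rightarrow> 'v \<Rightarrow> 'v) \<Rightarrow> bool" where
  "free_rank2_L0 sc L \<longleftrightarrow>
     (\<exists>w1 w2. \<forall>w. \<exists>!pq :: complex poly \<times> complex poly.
        w = polyact sc (L 0) (fst pq) w1 + polyact sc (L 0) (snd pq) w2)"

(* The module N_t(lambda, alpha): space C[x] (+) C[y] as pairs (f, g). *)
definition Nsc :: "complex \<Rightarrow> complex poly \<times> complex poly \<Rightarrow> complex poly \<times> complex poly" where
  "Nsc c fg = (smult c (fst fg), smult c (snd fg))"

definition Neven :: "(complex poly \<times> complex poly) set" where
  "Neven = {(f, 0) | f. True}"

definition Nodd :: "(complex poly \<times> complex poly) set" where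
  "Nodd = {(0, g) | g. True}"

(* lampow lam k = lambda^(k/2) := (csqrt lambda)^k, fixed square root csqrt *)
definition lampow :: "complex \<Rightarrow> int \<Rightarrow> complex" where
  "lampow lam k = csqrt lam powi k"

definition pshift :: "complex poly \<Rightarrow> complex \<Rightarrow> complex poly" where
  "pshift f c = pcompose f [:c, 1:]"

definition NL :: "complex \<Rightarrow> complex \<Rightarrow> int \<Rightarrow> complex poly \<times> complex poly \<Rightarrow> complex poly \<times> complex poly" where
  "NL lam al m fg =
     (smult (lampow lam (2 * m)) ([:of_int m * al, 1:] * pshift (fst fg) (of_int m)),
      smult (lampow lam (2 * m)) ([:of_int m * (al + 1/2), 1:] * pshift (snd fg) (of_int m)))"

definition NI :: "complex \<Rightarrow> complex \<Rightarrow> complex \<Rightarrow> int \<Rightarrow> complex poly \<times> complex poly \<Rightarrow> complex poly \<times> complex poly" where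
  "NI t lam al k fg =
     (smult (- 2 * (t powi k) * lampow lam k * al) (pshift (fst fg) (of_int k / 2)),
      smult ((t powi k) * lampow lam k * (1 - 2 * al)) (pshift (snd fg) (of_int k / 2)))"

(* G k = G_{k/2}: G_p f(x) = t^{2p} lam^p f(y+p),  G_p g(y) = (-t)^{2p} lam^p (x + 2p al) g(x+p) *)
definition NG :: "complex \<Rightarrow> complex \<Rightarrow> complex \<Rightarrow> int \<Rightarrow> complex poly \<times> complex poly \<Rightarrow> complex poly \<times> complex poly" where
  "NG t lam al k fg =
     (smult (((- t) powi k) * lampow lam k) ([:of_int k * al, 1:] * pshift (snd fg) (of_int k / 2)),
      smult ((t powi k) * lampow lam k) (pshift (fst fg) (of_int k / 2)))"

end

theory Submission
  imports Defs "HOL-Computational_Algebra.Computational_Algebra" "HOL-Computational_Algebra.Field_as_Ring"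
begin

lemma polyact_bound:
  assumes vs: "vector_space sc" and d: "degree p \<le> n"
  shows "polyact sc A p v = (\<Sum>i\<le>n. sc (coeff p i) ((A^^i) v))"
proof -
  interpret vector_space sc by (fact vs)
  show ?thesis unfolding polyact_def
    by (rule sum.mono_neutral_left) (use d in \<open>auto simp: coeff_eq_0\<close>)
qed

lemma polyact_0: assumes vs: "vector_space sc" shows "polyact sc A 0 v = 0"
proof -
  interpret vector_space sc by (fact vs)
  show ?thesis by (simp add: polyact_def)
qed

lemma polyact_pCons:
  assumes vs: "vector_space sc"
  shows "polyact sc A (pCons a p) v = sc a v + polyact sc A p (A v)"
proof -
  have "polyact sc A (pCons a p) v = (\<Sum>i\<le>Suc (degree p). sc (coeff (pCons a p) i) ((A^^i) v))"
    by (rule polyact_bound[OF vs]) (simp add: degree_pCons_le)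
  also have "\<dots> = sc a v + (\<Sum>i\<le>degree p. sc (coeff p i) ((A^^(Suc i)) v))"
    by (subst sum.atMost_Suc_shift) simp
  also have "(\<Sum>i\<le>degree p. sc (coeff p i) ((A^^(Suc i)) v)) = polyact sc A p (A v)"
    unfolding polyact_def by (simp add: funpow_Suc_right del: funpow.simps)
  finally show ?thesis .
qed

locale pa = vector_space sc for sc :: "complex \<Rightarrow> 'v::ab_group_add \<Rightarrow> 'v" +
  fixes A :: "'v \<Rightarrow> 'v"
  assumes linA: "Vector_Spaces.linear sc sc A"
begin

lemma vs: "vector_space sc" by unfold_locales

lemma lin_add: "Vector_Spaces.linear sc sc T \<Longrightarrow> T (x + y) = T x + T y"
  by (simp add: linear_iff_module_hom module_hom.add)
lemma lin_scale: "Vector_Spaces.linear sc sc T \<Longrightarrow> T (sc c x) = sc c (T x)"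
  by (simp add: linear_iff_module_hom module_hom.scale)
lemma lin_zero: "Vector_Spaces.linear sc sc T \<Longrightarrow> T 0 = 0"
  using lin_scale[of T 0 0] by simp
lemma lin_minus: "Vector_Spaces.linear sc sc T \<Longrightarrow> T (- x) = - T x"
  using lin_scale[of T "-1" x] by simp
lemma lin_diff: "Vector_Spaces.linear sc sc T \<Longrightarrow> T (x - y) = T x - T y"
  using lin_add[of T x "-y"] lin_minus[of T y] by simp

abbreviation PA where "PA p v \<equiv> polyact sc A p v"

lemma PA_0[simp]: "PA 0 v = 0" by (rule polyact_0[OF vs])
lemma PA_pCons: "PA (pCons a p) v = sc a v + PA p (A v)" by (rule polyact_pCons[OF vs])

lemma PA_add_vec: "PA p (v + w) = PA p v + PA p w"
proof (induction p arbitrary: v w)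
  case 0 then show ?case by simp
next
  case (pCons a p) then show ?case
    by (simp add: PA_pCons lin_add[OF linA] scale_right_distrib algebra_simps)
qed

lemma PA_scale_vec: "PA p (sc c v) = sc c (PA p v)"
proof (induction p arbitrary: v)
  case 0 then show ?case by simp
next
  case (pCons a p) then show ?case
    by (simp add: PA_pCons lin_scale[OF linA] scale_right_distrib mult.commute)
qed

lemma PA_zero_vec[simp]: "PA p 0 = 0"
  using PA_scale_vec[of p 0 0] by simp

lemma PA_minus_vec: "PA p (- v) = - PA p v"
  using PA_scale_vec[of p "-1" v] by simp

lemma PA_diff_vec: "PA p (v - w) = PA p v - PA p w"
  using PA_add_vec[of p v "-w"] PA_minus_vec[of p w] by simp

lemma PA_add: "PA (p + q) v = PA p v + PA q v"
proof (induction p arbitrary: q v)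
  case 0 then show ?case by simp
next
  case (pCons a p)
  obtain b q' where q: "q = pCons b q'" by (cases q) auto
  show ?case using pCons.IH[of q' "A v"] by (simp add: q PA_pCons scale_left_distrib algebra_simps)
qed

lemma PA_smult: "PA (smult c p) v = sc c (PA p v)"
proof (induction p arbitrary: v)
  case 0 then show ?case by simp
next
  case (pCons a p) then show ?case
    by (simp add: PA_pCons scale_right_distrib)
qed

lemma PA_uminus: "PA (- p) v = - PA p v"
  using PA_smult[of "-1" p v] by simp

lemma PA_diff: "PA (p - q) v = PA p v - PA q v"
  using PA_add[of p "-q" v] PA_uminus[of q v] by simp

lemma PA_const[simp]: "PA [:c:] v = sc c v"
  by (simp add: PA_pCons)

lemma PA_one[simp]: "PA 1 v = v"
  by (simp add: one_pCons PA_pCons)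

lemma PA_x: "PA [:c, 1:] v = sc c v + A v"
  by (simp add: PA_pCons)

lemma PA_comm:
  assumes T: "Vector_Spaces.linear sc sc T" and c: "\<And>v. T (A v) = A (T v)"
  shows "T (PA p v) = PA p (T v)"
proof (induction p arbitrary: v)
  case 0 then show ?case by (simp add: lin_zero[OF T])
next
  case (pCons a p) then show ?case
    by (simp add: PA_pCons lin_add[OF T] lin_scale[OF T] c)
qed

lemma PA_mult: "PA (p * q) v = PA p (PA q v)"
proof (induction p arbitrary: v)
  case 0 then show ?case by simp
next
  case (pCons a p) then show ?case
    by (simp add: PA_pCons PA_add PA_smult PA_comm[OF linA])
qed

lemma PA_swap: "PA p (PA q v) = PA q (PA p v)"
  by (simp flip: PA_mult add: mult.commute)

lemma PA_shift:
  assumes T: "Vector_Spaces.linear sc sc T" and c: "\<And>v. T (A v) = A (T v) + sc c (T v)"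
  shows "T (PA p v) = PA (pcompose p [:c, 1:]) (T v)"
proof (induction p arbitrary: v)
  case 0 then show ?case by (simp add: lin_zero[OF T])
next
  case (pCons a p)
  show ?case
    by (simp add: PA_pCons lin_add[OF T] lin_scale[OF T] pCons.IH c pcompose_pCons PA_add PA_mult
        PA_add_vec PA_scale_vec PA_x PA_comm[OF linA] PA_smult algebra_simps)
qed

lemma PA_sub:
  assumes S: "subspace S" and AS: "\<And>x. x \<in> S \<Longrightarrow> A x \<in> S" and v: "v \<in> S"
  shows "PA p v \<in> S"
  using v
proof (induction p arbitrary: v)
  case 0 then show ?case using S by (simp add: subspace_def)
next
  case (pCons a p) then show ?case using S AS
    by (simp add: PA_pCons subspace_def)
qed

end


lemma tmod_swap: "tmod sc V0 V1 L I G \<Longrightarrow> tmod sc V1 V0 L I G"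
  unfolding tmod_def apply (intro conjI; (elim conjE)?)
  apply (auto simp: Int_commute)
  by (metis add.commute)

lemma ker23:
  fixes p1 p2 p3 q1 q2 q3 :: "'a::idom"
  shows "\<exists>f1 f2 f3. (f1 \<noteq> 0 \<or> f2 \<noteq> 0 \<or> f3 \<noteq> 0) \<and> f1*p1+f2*p2+f3*p3 = 0 \<and> f1*q1+f2*q2+f3*q3 = 0"
proof -
  define D1 where "D1 = p2*q3 - p3*q2"
  define D2 where "D2 = p3*q1 - p1*q3"
  define D3 where "D3 = p1*q2 - p2*q1"
  show ?thesis
  proof (cases "D1 \<noteq> 0 \<or> D2 \<noteq> 0 \<or> D3 \<noteq> 0")
    case True
    then show ?thesis
      by (rule_tac x=D1 in exI, rule_tac x=D2 in exI, rule_tac x=D3 in exI)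
         (simp add: D1_def D2_def D3_def algebra_simps)
  next
    case False
    then have d3: "p1*q2 = p2*q1" by (simp add: D3_def)
    show ?thesis
    proof (cases "q1 \<noteq> 0 \<or> q2 \<noteq> 0")
      case True
      then show ?thesis
        by (rule_tac x=q2 in exI, rule_tac x="-q1" in exI, rule_tac x=0 in exI)
           (use d3 in \<open>auto simp: algebra_simps\<close>)
    next
      case F2: False
      show ?thesis
      proof (cases "p1 \<noteq> 0 \<or> p2 \<noteq> 0")
        case True
        then show ?thesis using F2
          by (rule_tac x=p2 in exI, rule_tac x="-p1" in exI, rule_tac x=0 in exI)
             (auto simp: algebra_simps)
      next
        case False
        then show ?thesis using F2
          by (rule_tac x=1 in exI, rule_tac x=0 in exI, rule_tac x=0 in exI) auto
      qed
    qed
  qed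
qed

locale tm =
  fixes sc :: "complex \<Rightarrow> 'v::ab_group_add \<Rightarrow> 'v" and V0 V1 :: "'v set" and L I G :: "int \<Rightarrow> 'v \<Rightarrow> 'v"
  assumes tm: "tmod sc V0 V1 L I G"
begin

lemma tmd: "vector_space sc"
  "module.subspace sc V0" "module.subspace sc V1" "V0 \<inter> V1 = {0}"
  "(\<forall>v. \<exists>a\<in>V0. \<exists>b\<in>V1. v = a + b)"
  "(\<forall>m. Vector_Spaces.linear sc sc (L m))"
  "(\<forall>k. odd k \<longrightarrow> Vector_Spaces.linear sc sc (I k))"
  "(\<forall>k. Vector_Spaces.linear sc sc (G k))"
  "(\<forall>m. L m ` V0 \<subseteq> V0 \<and> L m ` V1 \<subseteq> V1)"
  "(\<forall>k. odd k \<longrightarrow> I k ` V0 \<subseteq> V0 \<and> I k ` V1 \<subseteq> V1)"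
  "(\<forall>k. G k ` V0 \<subseteq> V1 \<and> G k ` V1 \<subseteq> V0)"
  "(\<forall>m n v. L m (L n v) - L n (L m v) = sc (of_int (m - n)) (L (m + n) v))"
  "(\<forall>m k v. odd k \<longrightarrow>
        L m (I k v) - I k (L m v) = sc (- of_int k / 2) (I (2 * m + k) v))"
  "(\<forall>m k v. L m (G k v) - G k (L m v) = sc (of_int (m - k) / 2) (G (2 * m + k) v))"
  "(\<forall>j k v. odd j \<longrightarrow> odd k \<longrightarrow> I j (I k v) - I k (I j v) = 0)"
  "(\<forall>j k v. odd j \<longrightarrow> I j (G k v) - G k (I j v) = G (j + k) v)"
  "(\<forall>j k v. even (j + k) \<longrightarrow>
        G j (G k v) + G k (G j v) = sc ((-1) powi j * 2) (L ((j + k) div 2) v))"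
  "(\<forall>j k v. odd (j + k) \<longrightarrow>
        G j (G k v) + G k (G j v) =
          sc ((-1) powi (j + 1) * (of_int (j - k) / 2)) (I (j + k) v))"
  apply (insert tm[unfolded tmod_def]) by (elim conjE, assumption)+

lemma vsp: "vector_space sc" by (rule tmd(1))
lemma linL: "Vector_Spaces.linear sc sc (L m)" using tmd(6) by blast
lemma linI: "odd k \<Longrightarrow> Vector_Spaces.linear sc sc (I k)" using tmd(7) by blast
lemma linG: "Vector_Spaces.linear sc sc (G k)" using tmd(8) by blast

sublocale pa sc "L 0"
  by (rule pa.intro[OF vsp]) (rule pa_axioms.intro[OF linL])

abbreviation P where "P \<equiv> PA"

lemma sub0: "subspace V0" by (rule tmd(2))
lemma sub1: "subspace V1" by (rule tmd(3))
lemma int01: "V0 \<inter> V1 = {0}" by (rule tmd(4))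
lemma dec: "\<exists>a\<in>V0. \<exists>b\<in>V1. v = a + b" using tmd(5) by blast
lemma invL0: "v \<in> V0 \<Longrightarrow> L m v \<in> V0" using tmd(9) by blast
lemma invL1: "v \<in> V1 \<Longrightarrow> L m v \<in> V1" using tmd(9) by blast
lemma invI0: "odd k \<Longrightarrow> v \<in> V0 \<Longrightarrow> I k v \<in> V0" using tmd(10) by blast
lemma invI1: "odd k \<Longrightarrow> v \<in> V1 \<Longrightarrow> I k v \<in> V1" using tmd(10) by blast
lemma invG0: "v \<in> V0 \<Longrightarrow> G k v \<in> V1" using tmd(11) by blast
lemma invG1: "v \<in> V1 \<Longrightarrow> G k v \<in> V0" using tmd(11) by blast
lemma cLL: "L m (L n v) - L n (L m v) = sc (of_int (m - n)) (L (m + n) v)" using tmd(12) by blast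
lemma cLI: "odd k \<Longrightarrow> L m (I k v) - I k (L m v) = sc (- of_int k / 2) (I (2 * m + k) v)" using tmd(13) by blast
lemma cLG: "L m (G k v) - G k (L m v) = sc (of_int (m - k) / 2) (G (2 * m + k) v)" using tmd(14) by blast
lemma cII: "odd j \<Longrightarrow> odd k \<Longrightarrow> I j (I k v) - I k (I j v) = 0" using tmd(15) by blast
lemma cIG: "odd j \<Longrightarrow> I j (G k v) - G k (I j v) = G (j + k) v" using tmd(16) by blast
lemma cGGe: "even (j + k) \<Longrightarrow> G j (G k v) + G k (G j v) = sc ((-1) powi j * 2) (L ((j + k) div 2) v)"
  using tmd(17) by blast
lemma cGGo: "odd (j + k) \<Longrightarrow> G j (G k v) + G k (G j v) = sc ((-1) powi (j + 1) * (of_int (j - k) / 2)) (I (j + k) v)"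
  using tmd(18) by blast

lemma P0: "v \<in> V0 \<Longrightarrow> P f v \<in> V0" by (rule PA_sub[OF sub0 invL0])
lemma P1: "v \<in> V1 \<Longrightarrow> P f v \<in> V1" by (rule PA_sub[OF sub1 invL1])

lemma sub_add: "subspace S \<Longrightarrow> x \<in> S \<Longrightarrow> y \<in> S \<Longrightarrow> x + y \<in> S" by (simp add: subspace_def)
lemma sub_scale: "subspace S \<Longrightarrow> x \<in> S \<Longrightarrow> sc c x \<in> S" by (simp add: subspace_def)
lemma sub_minus: "subspace S \<Longrightarrow> x \<in> S \<Longrightarrow> - x \<in> S" using sub_scale[of S x "-1"] by simp
lemma sub_diff: "subspace S \<Longrightarrow> x \<in> S \<Longrightarrow> y \<in> S \<Longrightarrow> x - y \<in> S"
  using sub_add[of S x "-y"] sub_minus[of S y] by simp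

lemma split0: assumes "a \<in> V0" "b \<in> V1" "a + b = 0" shows "a = 0" "b = 0"
proof -
  have "a = - b" using assms(3) by (simp add: eq_neg_iff_add_eq_0)
  then have "a \<in> V1" using sub_minus[OF sub1 assms(2)] by simp
  then show "a = 0" using assms(1) int01 by auto
  then show "b = 0" using assms(3) by simp
qed

lemma half2: "x + x = sc 2 u \<Longrightarrow> x = u"
proof -
  assume h: "x + x = sc 2 u"
  have "sc 2 x = sc (1 + 1) x" by simp
  also have "\<dots> = x + x" by (simp only: scale_left_distrib scale_one)
  finally have "sc 2 x = sc 2 u" using h by simp
  then have "sc (1/2) (sc 2 x) = sc (1/2) (sc 2 u)" by simp
  then show "x = u" by (simp only: scale_scale) simp
qed

lemma GG0: "G 0 (G 0 v) = L 0 v"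
proof -
  have h: "G 0 (G 0 v) + G 0 (G 0 v) = sc ((-1) powi 0 * 2) (L ((0 + 0) div 2) v)" by (rule cGGe) simp
  have e1: "(-1::complex) powi 0 * 2 = 2" by simp
  have e2: "((0::int) + 0) div 2 = 0" by simp
  have h': "G 0 (G 0 v) + G 0 (G 0 v) = sc 2 (L 0 v)" using h unfolding e1 e2 .
  show ?thesis by (rule half2[OF h'])
qed

lemma sh0L: "L m (L 0 v) = L 0 (L m v) + sc (of_int m) (L m v)"
  using cLL[of m 0 v] by (simp add: diff_eq_eq add.commute)
lemma sh0I: "odd k \<Longrightarrow> I k (L 0 v) = L 0 (I k v) + sc (of_int k / 2) (I k v)"
proof -
  assume k: "odd k"
  have "L 0 (I k v) - I k (L 0 v) = sc (- of_int k / 2) (I k v)" using cLI[OF k, of 0 v] by simp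
  then have "I k (L 0 v) = L 0 (I k v) - sc (- of_int k / 2) (I k v)" by (simp add: eq_diff_eq diff_eq_eq add.commute)
  also have "\<dots> = L 0 (I k v) + sc (of_int k / 2) (I k v)"
    using scale_minus_left[of "of_int k / 2" "I k v"] by simp
  finally show ?thesis .
qed
lemma sh0G: "G k (L 0 v) = L 0 (G k v) + sc (of_int k / 2) (G k v)"
proof -
  have "L 0 (G k v) - G k (L 0 v) = sc (- of_int k / 2) (G k v)" using cLG[of 0 k v] by simp
  then have "G k (L 0 v) = L 0 (G k v) - sc (- of_int k / 2) (G k v)" by (simp add: eq_diff_eq diff_eq_eq add.commute)
  also have "\<dots> = L 0 (G k v) + sc (of_int k / 2) (G k v)"
    using scale_minus_left[of "of_int k / 2" "G k v"] by simp
  finally show ?thesis .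
qed

lemma L_P: "L m (P f v) = P (pshift f (of_int m)) (L m v)"
  unfolding pshift_def by (rule PA_shift[OF linL sh0L])
lemma I_P: "odd k \<Longrightarrow> I k (P f v) = P (pshift f (of_int k / 2)) (I k v)"
  unfolding pshift_def by (rule PA_shift[OF linI sh0I])
lemma G_P: "G k (P f v) = P (pshift f (of_int k / 2)) (G k v)"
  unfolding pshift_def by (rule PA_shift[OF linG sh0G])
lemma G0_P: "G 0 (P f v) = P f (G 0 v)"
  using G_P[of 0 f v] by (simp add: pshift_def)

lemma PX: "P [:0, 1:] v = L 0 v" by (simp add: PA_x)

end

locale tmf = tm +
  assumes fr: "free_rank2_L0 sc L"
begin

lemma frw: obtains w1 w2 where "\<And>w. \<exists>!pq :: complex poly \<times> complex poly. w = P (fst pq) w1 + P (snd pq) w2"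
  using fr unfolding free_rank2_L0_def by blast

lemma tf: assumes "P f v = 0" "f \<noteq> 0" shows "v = 0"
proof -
  obtain w1 w2 where u: "\<And>w. \<exists>!pq :: complex poly \<times> complex poly. w = P (fst pq) w1 + P (snd pq) w2"
    using frw by blast
  obtain p q where v: "v = P p w1 + P q w2" using u[of v] by auto
  have "P f v = P (f*p) w1 + P (f*q) w2" by (simp add: v PA_add_vec PA_mult)
  then have e1: "0 = P (fst (f*p, f*q)) w1 + P (snd (f*p, f*q)) w2" using assms by simp
  have e2: "0 = P (fst (0::complex poly, 0::complex poly)) w1 + P (snd (0::complex poly, 0::complex poly)) w2" by simp
  have "(f*p, f*q) = (0, 0)" using u[of 0] e1 e2 by blast
  then have "p = 0" "q = 0" using assms by auto
  then show ?thesis by (simp add: v)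
qed

lemma P_inj: assumes "P f v = P g v" "v \<noteq> 0" shows "f = g"
proof (rule ccontr)
  assume "f \<noteq> g"
  then have "f - g \<noteq> 0" by simp
  moreover have "P (f - g) v = 0" using assms by (simp add: PA_diff)
  ultimately show False using tf assms by blast
qed

lemma G0_inj: "G 0 z = 0 \<Longrightarrow> z = 0"
proof -
  assume "G 0 z = 0"
  then have "L 0 z = 0" using GG0[of z] lin_zero[OF linG] by simp
  then have "P [:0,1:] z = 0" by (simp add: PX)
  then show "z = 0" by (rule tf) simp
qed

lemma exists_nz: "\<exists>w. w \<noteq> 0 \<and> G 0 w = G 0 w"
proof -
  obtain w1 w2 where u: "\<And>w. \<exists>!pq :: complex poly \<times> complex poly. w = P (fst pq) w1 + P (snd pq) w2"
    using frw by blast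
  show ?thesis
  proof (rule ccontr)
    assume "\<not> ?thesis"
    then have z: "w1 = 0" "w2 = 0" by auto
    have "0 = P (fst (1::complex poly, 0::complex poly)) w1 + P (snd (1::complex poly, 0::complex poly)) w2" using z by simp
    moreover have "0 = P (fst (0::complex poly, 0::complex poly)) w1 + P (snd (0::complex poly, 0::complex poly)) w2" by simp
    ultimately have "(1::complex poly, 0::complex poly) = (0, 0)" using u[of 0] by blast
    then show False by simp
  qed
qed

lemma dep3: "\<exists>f1 f2 f3. (f1 \<noteq> 0 \<or> f2 \<noteq> 0 \<or> f3 \<noteq> 0) \<and> P f1 z1 + P f2 z2 + P f3 z3 = 0"
proof -
  obtain w1 w2 where u: "\<And>w. \<exists>!pq :: complex poly \<times> complex poly. w = P (fst pq) w1 + P (snd pq) w2"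
    using frw by blast
  obtain p1 q1 where z1: "z1 = P p1 w1 + P q1 w2" using u[of z1] by auto
  obtain p2 q2 where z2: "z2 = P p2 w1 + P q2 w2" using u[of z2] by auto
  obtain p3 q3 where z3: "z3 = P p3 w1 + P q3 w2" using u[of z3] by auto
  obtain f1 f2 f3 where f: "f1 \<noteq> 0 \<or> f2 \<noteq> 0 \<or> f3 \<noteq> 0" "f1*p1+f2*p2+f3*p3 = 0" "f1*q1+f2*q2+f3*q3 = 0"
    using ker23[of p1 p2 p3 q1 q2 q3] by blast
  have "P f1 z1 + P f2 z2 + P f3 z3 = P (f1*p1+f2*p2+f3*p3) w1 + P (f1*q1+f2*q2+f3*q3) w2"
    by (simp add: z1 z2 z3 PA_add_vec PA_add PA_mult algebra_simps)
  also have "\<dots> = 0" using f by simp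
  finally show ?thesis using f(1) by blast
qed

lemma V0_nz: "\<exists>v\<in>V0. v \<noteq> 0"
proof (rule ccontr)
  assume "\<not> (\<exists>v\<in>V0. v \<noteq> 0)"
  then have a: "\<And>v. v \<in> V0 \<Longrightarrow> v = 0" by blast
  obtain w where w: "w \<noteq> 0" "G 0 w = G 0 w" using exists_nz by blast
  obtain x y where xy: "x \<in> V0" "y \<in> V1" "w = x + y" using dec[of w] by blast
  have "x = 0" using a xy(1) by blast
  then have "w \<in> V1" using xy by simp
  then have "G 0 w \<in> V0" by (rule invG1)
  then have "G 0 w = 0" by (rule a)
  then have "w = 0" by (rule G0_inj)
  then show False using w by simp
qed

lemma cyclic0: "\<exists>e\<in>V0. e \<noteq> 0 \<and> (\<forall>v\<in>V0. \<exists>f. v = P f e)"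
proof -
  obtain w1 w2 where u: "\<And>w. \<exists>!pq :: complex poly \<times> complex poly. w = P (fst pq) w1 + P (snd pq) w2"
    using frw by blast
  obtain u1 v1 where uv1: "u1 \<in> V0" "v1 \<in> V1" "w1 = u1 + v1" using dec[of w1] by blast
  obtain u2 v2 where uv2: "u2 \<in> V0" "v2 \<in> V1" "w2 = u2 + v2" using dec[of w2] by blast
  have gen: "\<exists>p q. v = P p u1 + P q u2" if v: "v \<in> V0" for v
  proof -
    obtain p q where vpq: "v = P p w1 + P q w2" using u[of v] by auto
    let ?a = "P p u1 + P q u2" and ?b = "P p v1 + P q v2"
    have a: "?a \<in> V0" using uv1 uv2 by (intro sub_add[OF sub0] P0)
    have b: "?b \<in> V1" using uv1 uv2 by (intro sub_add[OF sub1] P1)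
    have "v = ?a + ?b" by (simp add: vpq uv1 uv2 PA_add_vec algebra_simps)
    then have "(?a - v) + ?b = 0" by (simp add: algebra_simps)
    moreover have "?a - v \<in> V0" using a v by (rule sub_diff[OF sub0])
    ultimately have "?a - v = 0" using split0 b by blast
    then show ?thesis by auto
  qed
  have nz: "\<exists>v\<in>V0. v \<noteq> 0" by (rule V0_nz)
  obtain f1 f2 f3 where f: "f1 \<noteq> 0 \<or> f2 \<noteq> 0 \<or> f3 \<noteq> 0" "P f1 u1 + P f2 u2 + P f3 (G 0 u1) = 0"
    using dep3 by blast
  have A: "P f1 u1 + P f2 u2 \<in> V0" using uv1 uv2 by (intro sub_add[OF sub0] P0)
  have B: "P f3 (G 0 u1) \<in> V1" using uv1 by (intro P1 invG0)
  have A0: "P f1 u1 + P f2 u2 = 0" and B0: "P f3 (G 0 u1) = 0" using split0[OF A B] f(2) by auto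
  have "G 0 (P f3 u1) = 0" using B0 by (simp add: G0_P)
  then have fu: "P f3 u1 = 0" by (rule G0_inj)
  show ?thesis
  proof (cases "u1 = 0")
    case True
    have g2: "\<exists>q. v = P q u2" if "v \<in> V0" for v using gen[OF that] True by auto
    have "u2 \<noteq> 0" using nz g2 by fastforce
    then show ?thesis using uv2 g2 by blast
  next
    case False
    then have "f3 = 0" using fu tf by blast
    then have f12: "f1 \<noteq> 0 \<or> f2 \<noteq> 0" using f(1) by simp
    define d where "d = gcd f1 f2"
    have d0: "d \<noteq> 0" using f12 by (simp add: d_def)
    obtain r where r: "f1 = d * r" using gcd_dvd1[of f1 f2] unfolding d_def dvd_def by blast
    obtain s where s: "f2 = d * s" using gcd_dvd2[of f1 f2] unfolding d_def dvd_def by blast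
    obtain x y where xy: "x * f1 + y * f2 = d"
      using bezout_coefficients_fst_snd[of f1 f2] unfolding d_def by blast
    have "d * (x * r + y * s) = d * 1" using xy r s by (simp add: algebra_simps)
    then have xyrs: "x * r + y * s = 1" using d0 by (simp only: mult_cancel_left) simp
    have "P d (P r u1 + P s u2) = 0" using A0 by (simp add: r s PA_add_vec PA_mult)
    then have rs: "P r u1 + P s u2 = 0" using d0 tf by blast
    then have rs': "P s u2 = - P r u1" by (simp add: eq_neg_iff_add_eq_0 add.commute)
    define e where "e = P x u2 - P y u1"
    have "P s e = P s (P x u2) - P s (P y u1)" by (simp add: e_def PA_diff_vec)
    also have "\<dots> = P x (P s u2) - P y (P s u1)" by (simp add: PA_swap[of s x] PA_swap[of s y])
    also have "\<dots> = - P x (P r u1) - P y (P s u1)" by (simp add: rs' PA_minus_vec)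
    also have "\<dots> = - P (x * r + y * s) u1" by (simp add: PA_add PA_mult)
    finally have e1: "u1 = P (- s) e" by (simp add: xyrs PA_uminus)
    have rs'': "P r u1 = - P s u2" using rs by (simp add: eq_neg_iff_add_eq_0)
    have "P r e = P r (P x u2) - P r (P y u1)" by (simp add: e_def PA_diff_vec)
    also have "\<dots> = P x (P r u2) - P y (P r u1)" by (simp add: PA_swap[of r x] PA_swap[of r y])
    also have "\<dots> = P x (P r u2) + P y (P s u2)" by (simp add: rs'' PA_minus_vec)
    also have "\<dots> = P (x * r + y * s) u2" by (simp add: PA_add PA_mult)
    finally have e2: "u2 = P r e" by (simp add: xyrs)
    have ge: "\<exists>f. v = P f e" if "v \<in> V0" for v
    proof -
      from gen[OF that] obtain p q where "v = P p u1 + P q u2" by blast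
      moreover have "P (p * (- s) + q * r) e = P p (P (-s) e) + P q (P r e)" by (simp only: PA_add PA_mult)
      ultimately have "v = P (p * (- s) + q * r) e" using e1 e2 by simp
      then show ?thesis by blast
    qed
    have eV: "e \<in> V0" unfolding e_def using uv1 uv2 by (intro sub_diff[OF sub0] P0)
    have "e \<noteq> 0" using nz ge by fastforce
    then show ?thesis using eV ge by blast
  qed
qed

end


lemma poly_pshift[simp]: "poly (pshift f c) z = poly f (z + c)"
  by (simp add: pshift_def poly_pcompose add.commute)

lemma deg_pshift[simp]: "degree (pshift f c) = degree f"
  by (simp add: pshift_def degree_pcompose)

lemma pshift_eq_0[simp]: "pshift f c = 0 \<longleftrightarrow> (f :: complex poly) = 0"
  unfolding pshift_def by (rule pcompose_eq_0_iff) simp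

lemma poly_ext: "(\<And>z. poly p z = poly q z) \<Longrightarrow> (p :: complex poly) = q"
  using poly_eq_poly_eq_iff by blast

lemma lin_poly: "(\<And>z. poly p z = c0 + c1 * z) \<Longrightarrow> (p :: complex poly) = [:c0, c1:]"
  by (rule poly_ext) (simp add: algebra_simps)

lemma const_poly: "(\<And>z. poly p z = c0) \<Longrightarrow> (p :: complex poly) = [:c0:]"
  by (rule poly_ext) simp

lemma periodic_const:
  fixes q :: "complex poly"
  assumes d: "d \<noteq> 0" and per: "\<And>z. poly q (z + d) = poly q z"
  shows "q = [:poly q 0:]"
proof (rule ccontr)
  define r where "r = q - [:poly q 0:]"
  assume "q \<noteq> [:poly q 0:]"
  then have r0: "r \<noteq> 0" by (simp add: r_def)
  have per': "\<And>z. poly q (d + z) = poly q z" using per by (simp add: add.commute)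
  have "poly q (of_nat n * d) = poly q 0" for n
    by (induction n) (simp_all add: distrib_right per')
  then have "range (\<lambda>n. of_nat n * d) \<subseteq> {x. poly r x = 0}" by (auto simp: r_def)
  moreover have "infinite (range (\<lambda>n::nat. of_nat n * d))"
    by (rule range_inj_infinite) (simp add: inj_on_def d)
  ultimately show False using poly_roots_finite[OF r0] finite_subset by blast
qed

lemma lin_coeffs:
  fixes c0 c1 :: complex
  assumes "\<And>z. f z = c0 + c1 * z"
  shows "c1 = f 1 - f 0" "c0 = f 0"
  using assms[of 1] assms[of 0] by simp_all

lemma int_rec:
  fixes f :: "int \<Rightarrow> complex"
  assumes f0: "f 0 = 1" and st: "\<And>n. f (n+1) = c * f n" and c: "c \<noteq> 0"
  shows "f n = c powi n"
proof (induction n rule: int_induct[where k=0])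
  case base then show ?case by (simp add: f0)
next
  case (step1 i) then show ?case by (simp add: st power_int_add_1' c)
next
  case (step2 i)
  have "f i = c * f (i - 1)" using st[of "i - 1"] by simp
  then have "f (i - 1) = f i / c" using c by (simp add: field_simps)
  then show ?case using step2 c by (simp add: power_int_diff)
qed

lemma deg1_form: "degree p \<le> 1 \<Longrightarrow> p = [:coeff p 0, coeff p 1:]"
  by (rule poly_eqI) (auto simp: coeff_pCons coeff_eq_0 split: nat.split)

locale pr =
  fixes a b g h i j :: "int \<Rightarrow> complex poly"
  assumes g0: "g 0 = 1" and h0: "h 0 = [:0,1:]"
  and R1a: "\<And>k. a k = smult ((-1) powi k) (pshift (g k) (of_int k/2) * h k)"
  and R1b: "\<And>k. b k = smult ((-1) powi k) (pshift (h k) (of_int k/2) * g k)"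
  and R2a: "\<And>k. pshift (g (-k)) (of_int k/2) * h k + pshift (g k) (of_int (-k)/2) * h (-k) = smult ((-1) powi k * 2) [:0,1:]"
  and R2b: "\<And>k. pshift (h (-k)) (of_int k/2) * g k + pshift (h k) (of_int (-k)/2) * g (-k) = smult ((-1) powi k * 2) [:0,1:]"
  and R3a: "\<And>m. b m - a m = smult (of_int m / 2) (g (2*m))"
  and R3b: "\<And>m. pshift [:0,1:] (of_int m) * a m - b m * [:0,1:] = smult (of_int m/2) (h (2*m))"
  and R4a: "\<And>m k. pshift (g k) (of_int m) * b m - pshift (a m) (of_int k/2) * g k = smult (of_int (m-k)/2) (g (2*m+k))"
  and R4b: "\<And>m k. pshift (h k) (of_int m) * a m - pshift (b m) (of_int k/2) * h k = smult (of_int (m-k)/2) (h (2*m+k))"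
  and R5a: "\<And>k. odd k \<Longrightarrow> g k * [:0,1:] + h k = smult (of_int k/2) (i k)"
  and R5b: "\<And>k. odd k \<Longrightarrow> h k + pshift [:0,1:] (of_int k/2) * g k = smult (of_int k/2) (j k)"
  and R6: "pshift (i (-1)) (1/2) * i 1 = pshift (i 1) (-1/2) * i (-1)"
begin

lemma sgn_sq: "((-1::complex) powi k) * ((-1) powi k) = 1" by simp
lemma sgn_nz: "((-1::complex) powi k) \<noteq> 0" by (simp add: power_int_minus_left)

lemma e2a: "poly (g (-k)) (z + of_int k/2) * poly (h k) z + poly (g k) (z - of_int k/2) * poly (h (-k)) z
    = (-1) powi k * 2 * z"
  using arg_cong[OF R2a[of k], of "\<lambda>p. poly p z"] by (simp add: algebra_simps)

lemma e2b: "poly (h (-k)) (z + of_int k/2) * poly (g k) z + poly (h k) (z - of_int k/2) * poly (g (-k)) z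
    = (-1) powi k * 2 * z"
  using arg_cong[OF R2b[of k], of "\<lambda>p. poly p z"] by (simp add: algebra_simps)

lemma stepA:
  assumes k: "k \<noteq> 0"
  shows "\<exists>c. pshift (g (-k)) (of_int k/2) * h k = [:c, (-1) powi k:]"
proof -
  define Q where "Q = pshift (g (-k)) (of_int k/2) * h k - [:0, (-1) powi k:]"
  define U where "U w = poly (g (-k)) (w + of_int k/2) * poly (h k) w" for w
  define V where "V w = poly (g k) (w - of_int k/2) * poly (h (-k)) w" for w
  have per: "poly Q (w + of_int k) = poly Q w" for w
  proof -
    have 1: "U (w + of_int k) + V (w + of_int k) = (-1) powi k * 2 * (w + of_int k)"
      unfolding U_def V_def by (rule e2a)
    have 2: "V (w + of_int k) + U w = (-1) powi k * 2 * (w + of_int k / 2)"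
      using e2b[of k "w + of_int k/2"] unfolding U_def V_def by (simp add: algebra_simps)
    have "U (w + of_int k) - U w = (U (w + of_int k) + V (w + of_int k)) - (V (w + of_int k) + U w)"
      by (simp add: algebra_simps)
    also have "\<dots> = (-1) powi k * 2 * (w + of_int k) - (-1) powi k * 2 * (w + of_int k / 2)"
      by (simp only: 1 2)
    also have "\<dots> = (-1) powi k * of_int k" by (simp add: algebra_simps)
    finally have "U (w + of_int k) - U w = (-1) powi k * of_int k" .
    then show ?thesis unfolding Q_def U_def by (simp add: algebra_simps)
  qed
  have "Q = [:poly Q 0:]" by (rule periodic_const[OF _ per]) (use k in simp)
  then have "pshift (g (-k)) (of_int k/2) * h k = [:poly Q 0:] + [:0, (-1) powi k:]"
    unfolding Q_def by (metis diff_add_cancel)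
  then show ?thesis by simp
qed

lemma stepA_deg:
  assumes k: "k \<noteq> 0"
  shows "g (-k) \<noteq> 0" "h k \<noteq> 0" "degree (g (-k)) + degree (h k) = 1"
proof -
  obtain c where c: "pshift (g (-k)) (of_int k/2) * h k = [:c, (-1) powi k:]" using stepA[OF k] by blast
  have nz: "pshift (g (-k)) (of_int k/2) * h k \<noteq> 0" using c sgn_nz[of k] by auto
  then show "g (-k) \<noteq> 0" "h k \<noteq> 0" by auto
  have "degree (pshift (g (-k)) (of_int k/2) * h k) = 1" using c sgn_nz[of k] by simp
  then show "degree (g (-k)) + degree (h k) = 1"
    using \<open>g (-k) \<noteq> 0\<close> \<open>h k \<noteq> 0\<close> by (simp add: degree_mult_eq)
qed

lemma gnz: "g k \<noteq> 0"
proof (cases "k = 0")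
  case True then show ?thesis by (simp add: g0)
next
  case False
  then have "-k \<noteq> 0" by simp
  from stepA_deg(1)[OF this] show ?thesis by simp
qed

lemma hnz: "h k \<noteq> 0"
proof (cases "k = 0")
  case True then show ?thesis by (simp add: h0)
next
  case False
  from stepA_deg(2)[OF this] show ?thesis .
qed

lemma dgh: "k \<noteq> 0 \<Longrightarrow> degree (g (-k)) + degree (h k) = 1"
  by (rule stepA_deg(3))

lemma da: "degree (a k) = degree (g k) + degree (h k)"
  using gnz[of k] hnz[of k] sgn_nz[of k] by (simp add: R1a[of k] degree_mult_eq)

lemma daa: "m \<noteq> 0 \<Longrightarrow> degree (a m) + degree (a (-m)) = 2"
  using dgh[of m] dgh[of "-m"] da[of m] da[of "-m"] by simp

lemma R3':
  shows "smult 2 (a m) = h (2*m) + g (2*m) * [:0,1:]"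
proof (cases "m = 0")
  case True
  then show ?thesis by (simp add: R1a[of 0] g0 h0 pshift_def pcompose_1)
next
  case False
  show ?thesis
  proof (rule poly_ext)
    fix z
    have 1: "poly (b m) z - poly (a m) z = of_int m / 2 * poly (g (2*m)) z"
      using arg_cong[OF R3a[of m], of "\<lambda>p. poly p z"] by simp
    have 2: "(z + of_int m) * poly (a m) z - poly (b m) z * z = of_int m / 2 * poly (h (2*m)) z"
      using arg_cong[OF R3b[of m], of "\<lambda>p. poly p z"] by (simp add: algebra_simps)
    have "poly (b m) z = poly (a m) z + of_int m / 2 * poly (g (2*m)) z" by (metis 1 add.commute diff_add_cancel)
    then have "of_int m / 2 * (2 * poly (a m) z - poly (h (2*m)) z - poly (g (2*m)) z * z) = 0"
      using 2 by (simp add: algebra_simps)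
    then have "2 * poly (a m) z - poly (h (2*m)) z - poly (g (2*m)) z * z = 0" using False by simp
    then show "poly (smult 2 (a m)) z = poly (h (2*m) + g (2*m) * [:0,1:]) z" by (simp add: algebra_simps)
  qed
qed

lemma stepC: "degree (g (2*m)) = 0"
proof (rule ccontr)
  assume A: "degree (g (2*m)) \<noteq> 0"
  then have m: "m \<noteq> 0" using g0 by auto
  have "degree (g (- (- (2*m)))) + degree (h (-(2*m))) = 1" by (rule dgh) (use m in simp)
  then have d1: "degree (g (2*m)) = 1" "degree (h (-(2*m))) = 0" using A by auto
  have "degree (g (-(2*m))) + degree (h (2*m)) = 1" by (rule dgh) (use m in simp)
  then have d2: "degree (h (2*m)) \<le> 1" by simp
  have d3: "degree (g (2*m) * [:0,1:]) = 2" using d1 gnz[of "2*m"] by (simp add: degree_mult_eq)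
  have "degree (smult 2 (a m)) = 2" unfolding R3' using d2 d3 by (subst degree_add_eq_right) auto
  then have "degree (a m) = 2" by simp
  then have "degree (a (-m)) = 0" using daa[OF m] by simp
  moreover have "degree (smult 2 (a (-m))) \<noteq> 0"
  proof -
    have "degree (g (-(2*m)) * [:0,1:]) = degree (g (-(2*m))) + 1" using gnz[of "-(2*m)"] by (simp add: degree_mult_eq)
    then have "degree (h (-(2*m)) + g (-(2*m)) * [:0,1:]) = degree (g (-(2*m))) + 1"
      using d1 by (subst degree_add_eq_right) auto
    then show ?thesis using R3'[of "-m"] by simp
  qed
  ultimately show False by simp
qed

definition gam where "gam m = coeff (g (2*m)) 0"
definition eta where "eta m = coeff (h (2*m)) 0"
definition del where "del m = coeff (h (2*m)) 1"

lemma g2: "g (2*m) = [:gam m:]"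
  unfolding gam_def using degree_0_id[OF stepC] by simp

lemma gam0: "gam 0 = 1" by (simp add: gam_def g0)
lemma gamnz: "gam m \<noteq> 0" using gnz[of "2*m"] g2[of m] by auto

lemma dh2: "degree (h (2*m)) = 1"
proof (cases "m = 0")
  case True then show ?thesis by (simp add: h0)
next
  case False
  have "degree (g (-(2*m))) + degree (h (2*m)) = 1" by (rule dgh) (use False in simp)
  moreover have "degree (g (-(2*m))) = 0" using stepC[of "-m"] by simp
  ultimately show ?thesis by simp
qed

lemma h2form: "h (2*m) = [:eta m, del m:]"
proof -
  have "degree (h (2*m)) \<le> 1" using dh2[of m] by simp
  from deg1_form[OF this] show ?thesis unfolding eta_def del_def .
qed

lemma ph2: "poly (h (2*m)) z = eta m + del m * z"
  by (subst h2form) (simp add: mult.commute)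

lemma pg2: "poly (g (2*m)) z = gam m" by (simp add: g2)

lemma pa: "poly (a m) z = (eta m + del m * z + gam m * z) / 2"
proof -
  have "2 * poly (a m) z = poly (h (2*m)) z + poly (g (2*m)) z * z"
    using arg_cong[OF R3'[of m], of "\<lambda>p. poly p z"] by simp
  then have "2 * poly (a m) z = eta m + del m * z + gam m * z" by (simp only: ph2 pg2)
  then show ?thesis by (simp add: field_simps)
qed

lemma pb: "poly (b m) z = poly (a m) z + of_int m / 2 * gam m"
proof -
  have "poly (b m) z - poly (a m) z = of_int m / 2 * poly (g (2*m)) z"
    using arg_cong[OF R3a[of m], of "\<lambda>p. poly p z"] by simp
  then have "poly (b m) z - poly (a m) z = of_int m / 2 * gam m" by (simp only: pg2)
  then show ?thesis by (metis add.commute diff_add_cancel)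
qed

lemma gd: "gam (-m) * del m = 1"
proof (cases "m = 0")
  case True then show ?thesis by (simp add: gam0 del_def h0)
next
  case False
  obtain c where c: "pshift (g (-(2*m))) (of_int (2*m)/2) * h (2*m) = [:c, (-1) powi (2*m):]"
    using stepA[of "2*m"] False by auto
  have gm: "g (-(2*m)) = [:gam (-m):]" using g2[of "-m"] by simp
  have p1: "poly (pshift (g (-(2*m))) (of_int (2*m)/2) * h (2*m)) z = gam (-m) * (eta m + del m * z)" for z
    by (simp only: gm poly_mult poly_pshift ph2) simp
  have p2: "poly (pshift (g (-(2*m))) (of_int (2*m)/2) * h (2*m)) z = c + z" for z
    unfolding c by (simp add: power_int_minus_left)
  have "gam (-m) * (eta m + del m * z) = c + z" for z
    using p1[of z] p2[of z] by simp
  from this[of 1] this[of 0] show ?thesis by (simp add: algebra_simps)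
qed

lemma recg: "gam n * (gam 1 / 2 - of_int n * (del 1 + gam 1) / 2) = (1 - 2 * of_int n) / 2 * gam (n + 1)"
proof -
  have e: "poly (pshift (g (2*n)) (of_int 1) * b 1 - pshift (a 1) (of_int (2*n)/2) * g (2*n)) 0
      = poly (smult (of_int (1 - 2*n)/2) (g (2*1 + 2*n))) 0"
    using R4a[where m=1 and k="2*n"] by simp
  have i: "2*1 + 2*n = 2*(n+1)" by simp
  have "gam n * poly (b 1) 0 - poly (a 1) (of_int n) * gam n = of_int (1 - 2*n)/2 * gam (n+1)"
    using e unfolding i by (simp only: poly_diff poly_mult poly_pshift pg2 poly_smult) simp
  then show ?thesis by (simp only: pb pa) (simp add: field_simps)
qed

lemma gam_m1: "gam (-1) * gam 1 = 1" and del1: "del 1 = gam 1"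
proof -
  have r: "gam (-1) * (gam 1 / 2 - of_int (-1) * (del 1 + gam 1) / 2) = (1 - 2 * of_int (-1)) / 2 * gam (-1 + 1)"
    by (rule recg)
  have l: "gam (-1) * (gam 1 / 2 - of_int (-1) * (del 1 + gam 1) / 2) = gam (-1) * gam 1 + gam (-1) * del 1 / 2"
    by (simp add: algebra_simps add_divide_distrib)
  have rr: "(1 - 2 * of_int (-1)) / 2 * gam (-1 + 1) = (3/2 :: complex)" by (simp add: gam0)
  have d: "gam (-1) * del 1 = 1" using gd[of 1] by simp
  have "gam (-1) * gam 1 + 1 / 2 = (3/2 :: complex)" using r l rr d by simp
  then show g: "gam (-1) * gam 1 = 1" by simp
  show "del 1 = gam 1"
    using d g gamnz[of "-1"] by (metis mult_left_cancel)
qed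

definition lam where "lam = gam 1"
lemma lamnz: "lam \<noteq> 0" using gamnz by (simp add: lam_def)

lemma gam_pow: "gam n = lam powi n"
proof (rule int_rec[where f=gam, OF gam0 _ lamnz])
  fix n
  have "gam n * (gam 1 / 2 - of_int n * (gam 1 + gam 1) / 2) = (1 - 2 * of_int n) / 2 * gam (n + 1)"
    using recg[of n] del1 by simp
  then have "(1 - 2 * of_int n) * (gam (n+1) - gam 1 * gam n) = 0"
    by (simp add: algebra_simps)
  moreover have "(1 - 2 * of_int n :: complex) \<noteq> 0"
  proof
    assume "(1 - 2 * of_int n :: complex) = 0"
    then have "(of_int (1 - 2 * n) :: complex) = of_int 0" by simp
    then have "1 - 2 * n = 0" by (simp only: of_int_eq_iff)
    then show False by presburger
  qed
  ultimately show "gam (n + 1) = lam * gam n" by (simp add: lam_def)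
qed

lemma del_pow: "del m = lam powi m"
  using gd[of m] gam_pow[of "-m"] lamnz by (simp add: power_int_minus field_simps)

lemma eta0: "eta 0 = 0" by (simp add: eta_def h0)

lemma recE: "lam powi n * eta 1 - lam * (2 * of_int n + 1) * eta n = (1 - 2 * of_int n) * eta (n + 1)"
proof -
  have e: "poly (pshift (h (2*n)) (of_int 1) * a 1 - pshift (b 1) (of_int (2*n)/2) * h (2*n)) 0
      = poly (smult (of_int (1 - 2*n)/2) (h (2*1 + 2*n))) 0"
    using R4b[where m=1 and k="2*n"] by simp
  have i: "2*1 + 2*n = 2*(n+1)" by simp
  have "poly (h (2*n)) 1 * poly (a 1) 0 - poly (b 1) (of_int n) * poly (h (2*n)) 0 = of_int (1 - 2*n)/2 * poly (h (2*(n+1))) 0"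
    using e unfolding i by (simp only: poly_diff poly_mult poly_pshift poly_smult) simp
  then have "(eta n + del n) * ((eta 1 + del 1 * 0 + gam 1 * 0) / 2)
      - ((eta 1 + del 1 * of_int n + gam 1 * of_int n) / 2 + of_int 1 / 2 * gam 1) * eta n
      = of_int (1 - 2*n)/2 * eta (n+1)"
    by (simp only: ph2 pa pb) simp
  then have "(eta n + lam powi n) * (eta 1 / 2)
      - ((eta 1 + lam * of_int n + lam * of_int n) / 2 + lam / 2) * eta n
      = of_int (1 - 2*n)/2 * eta (n+1)"
    by (simp add: del_pow del1 lam_def)
  then have "2 * (lam powi n * eta 1 - lam * (2 * of_int n + 1) * eta n) = 2 * ((1 - 2 * of_int n) * eta (n + 1))"
    by (simp add: field_simps)
  then show ?thesis by (simp only: mult_cancel_left) simp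
qed

lemma two_n_ne: "(1 - 2 * of_int n :: complex) \<noteq> 0"
proof
  assume "(1 - 2 * of_int n :: complex) = 0"
  then have "(of_int (1 - 2 * n) :: complex) = of_int 0" by simp
  then have "1 - 2 * n = 0" by (simp only: of_int_eq_iff)
  then show False by presburger
qed

lemma eta_form: "eta n * lam = of_int n * eta 1 * lam powi n"
proof (induction n rule: int_induct[where k=0])
  case base then show ?case by (simp add: eta0)
next
  case (step1 n)
  have r: "lam powi n * eta 1 - lam * (2 * of_int n + 1) * eta n = (1 - 2 * of_int n) * eta (n + 1)" by (rule recE)
  have p: "lam powi (n + 1) = lam powi n * lam" using lamnz by (simp add: power_int_add_1)
  have "(1 - 2 * of_int n) * (eta (n + 1) * lam - (of_int n + 1) * eta 1 * lam powi (n + 1)) = 0"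
    using r p step1.IH by algebra
  then show ?case using two_n_ne[of n] by simp
next
  case (step2 n)
  have r0: "lam powi (n - 1) * eta 1 - lam * (2 * of_int (n - 1) + 1) * eta (n - 1) = (1 - 2 * of_int (n - 1)) * eta (n - 1 + 1)" by (rule recE)
  have r: "lam powi (n - 1) * eta 1 - lam * (2 * (of_int n - 1) + 1) * eta (n - 1) = (1 - 2 * (of_int n - 1)) * eta n"
    using r0 by simp
  have p: "lam powi n = lam powi (n - 1) * lam" using lamnz by (simp add: power_int_minus_mult)
  have "(1 - 2 * of_int n) * lam * (eta (n - 1) * lam - (of_int n - 1) * eta 1 * lam powi (n - 1)) = 0"
    using r p step2.IH by algebra
  then show ?case using two_n_ne[of n] lamnz by simp
qed

definition al where "al = eta 1 / (2 * lam)"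

lemma etaE: "eta n = 2 * of_int n * al * lam powi n"
proof -
  have "eta n = (eta n * lam) / lam" using lamnz by simp
  also have "\<dots> = of_int n * eta 1 * lam powi n / lam" by (simp only: eta_form)
  also have "\<dots> = 2 * of_int n * al * lam powi n" using lamnz by (simp add: al_def)
  finally show ?thesis .
qed

lemma hE: "poly (h (2*m)) z = lam powi m * (z + 2 * of_int m * al)"
proof -
  have "poly (h (2*m)) z = 2 * of_int m * al * lam powi m + lam powi m * z" by (simp only: ph2 etaE del_pow)
  then show ?thesis by (simp add: algebra_simps)
qed

lemma aE: "poly (a m) z = lam powi m * (z + of_int m * al)"
proof -
  have "poly (a m) z = (2 * of_int m * al * lam powi m + lam powi m * z + lam powi m * z) / 2"
    by (simp only: pa etaE del_pow gam_pow)
  then show ?thesis by (simp add: algebra_simps add_divide_distrib)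
qed

lemma bE: "poly (b m) z = lam powi m * (z + of_int m * (al + 1/2))"
proof -
  have "poly (b m) z = lam powi m * (z + of_int m * al) + of_int m / 2 * lam powi m"
    by (simp only: pb aE gam_pow)
  then show ?thesis by (simp add: algebra_simps)
qed

lemma lampnz: "lam powi m \<noteq> 0" using lamnz by (simp add: power_int_not_zero)

lemma a_form: "a m = [:lam powi m * of_int m * al, lam powi m:]"
  by (rule lin_poly) (simp add: aE algebra_simps)

lemma deg_a: "degree (a m) = 1" using lampnz[of m] by (simp add: a_form)

lemma dgh_sum: "degree (g k) + degree (h k) = 1" using da[of k] deg_a[of k] by simp

lemma sgn_odd: "odd k \<Longrightarrow> ((-1::complex) powi k) = -1" by (simp add: power_int_minus_left)

lemma odd_nz: "odd k \<Longrightarrow> (of_int k :: complex) \<noteq> 0" by auto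

lemma oddg: assumes k: "odd k" shows "degree (g k) = 0"
proof (rule ccontr)
  assume A: "degree (g k) \<noteq> 0"
  then have "degree (h k) = 0" using dgh_sum[of k] by simp
  then have hk0: "h k = [:coeff (h k) 0:]" using degree_0_id by metis
  define e where "e = coeff (h k) 0"
  have hk: "h k = [:e:]" using hk0 unfolding e_def .
  have "a k = smult (-1) (pshift (g k) (of_int k/2) * [:e:])" by (simp only: R1a[of k] sgn_odd[OF k] hk)
  then have 1: "poly (a k) 0 = - (poly (g k) (of_int k / 2) * e)" by simp
  have "b k = smult (-1) (pshift [:e:] (of_int k/2) * g k)" by (simp only: R1b[of k] sgn_odd[OF k] hk)
  then have 2: "poly (b k) (of_int k / 2) = - (e * poly (g k) (of_int k / 2))" by (simp add: pshift_def)
  have "poly (a k) 0 = poly (b k) (of_int k / 2)" using 1 2 by (simp add: mult.commute)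
  then have "lam powi k * (of_int k * al) = lam powi k * (of_int k / 2 + of_int k * (al + 1/2))"
    by (simp only: aE bE) simp
  then have "lam powi k * of_int k = 0" by (simp add: algebra_simps)
  then show False using lampnz[of k] odd_nz[OF k] by simp
qed

definition go where "go k = coeff (g k) 0"

lemma gform: "odd k \<Longrightarrow> g k = [:go k:]"
  unfolding go_def using degree_0_id[OF oddg] by metis

lemma go_nz: "odd k \<Longrightarrow> go k \<noteq> 0" using gnz[of k] gform[of k] by auto

lemma hodd: assumes k: "odd k" shows "poly (h k) z = - poly (a k) z / go k"
proof -
  have "poly (a k) z = - (go k * poly (h k) z)"
    using arg_cong[OF R1a[of k], of "\<lambda>p. poly p z"] sgn_odd[OF k] gform[OF k] by simp
  then show ?thesis using go_nz[OF k] by (simp add: field_simps)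
qed

lemma recO1: assumes k: "odd k" and k1: "k \<noteq> 1" shows "go (k+2) = lam * go k"
proof -
  have e: "poly (pshift (g k) (of_int 1) * b 1 - pshift (a 1) (of_int k/2) * g k) 0
      = poly (smult (of_int (1 - k)/2) (g (2*1 + k))) 0"
    using R4a[where m=1 and k=k] by simp
  have i: "2*1 + k = k + 2" by simp
  have k2: "odd (k + 2)" using k by simp
  have "go k * poly (b 1) 0 - poly (a 1) (of_int k / 2) * go k = of_int (1 - k)/2 * go (k+2)"
    using e unfolding i by (simp only: poly_diff poly_mult poly_pshift poly_smult gform[OF k] gform[OF k2]) simp
  then have "go k * (lam * (of_int 1 * (al + 1/2))) - lam * (of_int k / 2 + of_int 1 * al) * go k = of_int (1 - k)/2 * go (k+2)"
    by (simp only: aE bE) (simp add: lam_def gam_pow[of 1, symmetric])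
  then have "(1 - of_int k) * (go (k+2) - lam * go k) = 0" by (simp add: algebra_simps)
  moreover have "(1 - of_int k :: complex) \<noteq> 0" using k1
    by (metis eq_iff_diff_eq_0 of_int_1 of_int_eq_iff)
  ultimately show ?thesis by simp
qed

lemma recO2: assumes k: "odd k" and k1: "k \<noteq> -1" shows "go k = lam * go (k - 2)"
proof -
  have e: "poly (pshift (g k) (of_int (-1)) * b (-1) - pshift (a (-1)) (of_int k/2) * g k) 0
      = poly (smult (of_int (-1 - k)/2) (g (2*(-1) + k))) 0"
    using R4a[where m="-1" and k=k] by simp
  have i: "2*(-1) + k = k - 2" by simp
  have k2: "odd (k - 2)" using k by simp
  have "go k * poly (b (-1)) 0 - poly (a (-1)) (of_int k / 2) * go k = of_int (-1 - k)/2 * go (k-2)"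
    using e unfolding i by (simp only: poly_diff poly_mult poly_pshift poly_smult gform[OF k] gform[OF k2]) simp
  then have "go k * (lam powi (-1) * (0 + of_int (-1) * (al + 1/2))) - lam powi (-1) * (of_int k / 2 + of_int (-1) * al) * go k = of_int (-1 - k)/2 * go (k-2)"
    by (simp only: aE bE)
  then have "(1 + of_int k) * (go k * inverse lam - go (k - 2)) = 0"
    by (simp add: power_int_minus algebra_simps)
  moreover have "(1 + of_int k :: complex) \<noteq> 0" using k1
    by (metis add.inverse_unique add_eq_0_iff of_int_1 of_int_eq_iff of_int_minus)
  ultimately have "go k * inverse lam = go (k - 2)" by simp
  then show ?thesis using lamnz by (simp add: field_simps)
qed

lemma recO: assumes k: "odd k" shows "go (k+2) = lam * go k"
proof (cases "k = 1")
  case False then show ?thesis using recO1[OF k] by simp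
next
  case True
  have "go 3 = lam * go (3 - 2)" by (rule recO2) auto
  then show ?thesis using True by simp
qed

definition sg where "sg = go 1"

lemma sgnz: "sg \<noteq> 0" unfolding sg_def by (rule go_nz) simp

lemma go_form: "go (2*n+1) = lam powi n * sg"
proof -
  have "go (2*n+1) / sg = lam powi n"
  proof (rule int_rec[where f="\<lambda>n. go (2*n+1) / sg", OF _ _ lamnz])
    show "go (2*0+1) / sg = 1" using sgnz by (simp add: sg_def)
    fix n
    have "go (2*(n+1)+1) = go ((2*n+1) + 2)" by (simp add: algebra_simps)
    also have "\<dots> = lam * go (2*n+1)" by (rule recO) simp
    finally show "go (2*(n+1)+1) / sg = lam * (go (2*n+1) / sg)" by simp
  qed
  then show ?thesis using sgnz by (simp add: field_simps)
qed

lemma i_eq: assumes k: "odd k" shows "poly (i k) z = 2 / of_int k * (go k * z - poly (a k) z / go k)"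
proof -
  have "go k * z + poly (h k) z = poly (g k * [:0,1:] + h k) z" by (simp add: gform[OF k])
  also have "\<dots> = of_int k / 2 * poly (i k) z" by (simp only: R5a[OF k] poly_smult)
  finally have "go k * z + poly (h k) z = of_int k / 2 * poly (i k) z" .
  then have "go k * z - poly (a k) z / go k = of_int k / 2 * poly (i k) z" by (simp add: hodd[OF k])
  then show ?thesis using odd_nz[OF k] by (simp add: field_simps)
qed

lemma j_eq: assumes k: "odd k" shows "poly (j k) z = 2 / of_int k * (- poly (a k) z / go k + (z + of_int k / 2) * go k)"
proof -
  have "poly (h k) z + (z + of_int k / 2) * go k = poly (h k + pshift [:0,1:] (of_int k/2) * g k) z"
    by (simp add: gform[OF k])
  also have "\<dots> = of_int k / 2 * poly (j k) z" by (simp only: R5b[OF k] poly_smult)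
  finally have "poly (h k) z + (z + of_int k / 2) * go k = of_int k / 2 * poly (j k) z" .
  then have H: "- poly (a k) z / go k + (z + of_int k / 2) * go k = of_int k / 2 * poly (j k) z" by (simp add: hodd[OF k])
  show ?thesis unfolding H using odd_nz[OF k] by simp
qed

lemma go1: "go 1 = sg" by (simp add: sg_def)
lemma gom1: "go (-1) = sg / lam"
  using go_form[of "-1"] lamnz by (simp add: power_int_minus field_simps)

lemma sg_sq: "sg * sg = lam"
proof -
  define A where "A = 2 * sg - 2 * lam / sg"
  define B where "B = - 2 * lam * al / sg"
  define A' where "A' = 2 / sg - 2 * sg / lam"
  define B' where "B' = - 2 * al / sg"
  have I1: "poly (i 1) z = A * z + B" for z
  proof -
    have "poly (i 1) z = 2 / of_int 1 * (go 1 * z - poly (a 1) z / go 1)" by (rule i_eq) simp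
    also have "\<dots> = 2 * (sg * z - lam * (z + al) / sg)" by (simp add: go1 aE)
    also have "\<dots> = A * z + B" unfolding A_def B_def using sgnz by (simp add: field_simps)
    finally show ?thesis .
  qed
  have I2: "poly (i (-1)) z = A' * z + B'" for z
  proof -
    have "poly (i (-1)) z = 2 / of_int (-1) * (go (-1) * z - poly (a (-1)) z / go (-1))" by (rule i_eq) simp
    also have "\<dots> = - 2 * (sg / lam * z - (z - al) / sg)"
      using lamnz by (simp add: gom1 aE power_int_minus inverse_eq_divide)
    also have "\<dots> = A' * z + B'" unfolding A'_def B'_def by (simp add: algebra_simps diff_divide_distrib)
    finally show ?thesis .
  qed
  have R: "(A' * (z + 1/2) + B') * (A * z + B) = (A * (z + -1/2) + B) * (A' * z + B')" for z
    using arg_cong[OF R6, of "\<lambda>p. poly p z"] by (simp only: poly_mult poly_pshift I1 I2)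
  have "A * A' = 0" using R[of 0] R[of 1] by algebra
  then have "A = 0 \<or> A' = 0" by simp
  then show ?thesis
  proof
    assume "A = 0"
    then show ?thesis unfolding A_def using sgnz by (simp add: field_simps)
  next
    assume "A' = 0"
    then show ?thesis unfolding A'_def using sgnz lamnz by (simp add: field_simps)
  qed
qed

lemma lam_pow: "lam powi m = sg powi m * sg powi m"
proof -
  have "lam powi m = (sg * sg) powi m" using sg_sq by simp
  then show ?thesis by (simp only: power_int_mult_distrib)
qed

lemma sg_pow2: "sg powi (2*m) = sg powi m * sg powi m"
proof -
  have "sg powi (2*m) = sg powi (m + m)" by (simp only: mult_2)
  also have "\<dots> = sg powi m * sg powi m" by (rule power_int_add) (simp add: sgnz)
  finally show ?thesis .
qed

lemma sg_pow2': "sg powi (m*2) = sg powi m * sg powi m"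
  using sg_pow2[of m] by (simp only: mult.commute)

lemma sgpnz: "sg powi m \<noteq> 0" using sgnz by (simp add: power_int_not_zero)

lemma gF: "g k = [:sg powi k:]"
proof (cases "even k")
  case True
  then obtain m where k: "k = 2*m" by blast
  show ?thesis by (simp add: k g2 gam_pow lam_pow sg_pow2)
next
  case False
  then obtain n where k: "k = 2*n+1" by (metis oddE)
  have "g k = [:go k:]" using False by (rule gform)
  also have "go k = sg powi k"
    using sgnz by (simp add: k go_form lam_pow sg_pow2 power_int_add_1)
  finally show ?thesis .
qed

lemma hF: "h k = smult ((-1) powi k * sg powi k) [:of_int k * al, 1:]"
proof (rule poly_ext)
  fix z
  show "poly (h k) z = poly (smult ((-1) powi k * sg powi k) [:of_int k * al, 1:]) z"
  proof (cases "even k")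
    case True
    then obtain m where k: "k = 2*m" by blast
    have "poly (h k) z = lam powi m * (z + 2 * of_int m * al)" by (simp only: k hE)
    then show ?thesis using True by (simp add: k lam_pow sg_pow2 sg_pow2' algebra_simps)
  next
    case False
    have "go k = sg powi k" using gF[of k] gform[OF False] by simp
    then have "poly (h k) z = - (sg powi k * sg powi k * (z + of_int k * al)) / sg powi k"
      using hodd[OF False] by (simp add: aE lam_pow)
    then show ?thesis using False sgpnz[of k] sgnz by (simp add: algebra_simps)
  qed
qed

lemma aF: "a m = smult (sg powi (2*m)) [:of_int m * al, 1:]"
  by (rule poly_ext) (simp add: aE lam_pow sg_pow2 sg_pow2' algebra_simps)

lemma bF: "b m = smult (sg powi (2*m)) [:of_int m * (al + 1/2), 1:]"
  by (rule poly_ext) (simp add: bE lam_pow sg_pow2 sg_pow2' algebra_simps)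

lemma iF: assumes k: "odd k" shows "i k = [:- 2 * sg powi k * al:]"
proof (rule const_poly)
  fix z
  have "go k = sg powi k" using gF[of k] gform[OF k] by simp
  then have "poly (i k) z = 2 / of_int k * (sg powi k * z - sg powi k * sg powi k * (z + of_int k * al) / sg powi k)"
    by (simp add: i_eq[OF k] aE lam_pow)
  also have "\<dots> = 2 / of_int k * (sg powi k * z - sg powi k * (z + of_int k * al))"
    using sgpnz[of k] by simp
  also have "\<dots> = 2 / of_int k * (- (of_int k * (sg powi k * al)))" by (simp add: algebra_simps)
  also have "\<dots> = - 2 * sg powi k * al" using odd_nz[OF k] by simp
  finally show "poly (i k) z = - 2 * sg powi k * al" .
qed

lemma jF: assumes k: "odd k" shows "j k = [:sg powi k * (1 - 2 * al):]"
proof (rule const_poly)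
  fix z
  have "go k = sg powi k" using gF[of k] gform[OF k] by simp
  then have "poly (j k) z = 2 / of_int k * (- (sg powi k * sg powi k * (z + of_int k * al)) / sg powi k + (z + of_int k / 2) * sg powi k)"
    by (simp add: j_eq[OF k] aE lam_pow)
  also have "\<dots> = 2 / of_int k * (- (sg powi k * (z + of_int k * al)) + (z + of_int k / 2) * sg powi k)"
    using sgpnz[of k] by simp
  also have "\<dots> = 2 / of_int k * (of_int k * (sg powi k * (1 - 2 * al)) / 2)" by (simp add: algebra_simps)
  also have "\<dots> = sg powi k * (1 - 2 * al)" using odd_nz[OF k] by simp
  finally show "poly (j k) z = sg powi k * (1 - 2 * al)" .
qed

theorem pr_final: "\<exists>s al. s \<noteq> 0 \<and> (\<forall>k. g k = [:s powi k:]) \<and>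
  (\<forall>k. h k = smult ((-1) powi k * s powi k) [:of_int k * al, 1:]) \<and>
  (\<forall>m. a m = smult (s powi (2*m)) [:of_int m * al, 1:]) \<and>
  (\<forall>m. b m = smult (s powi (2*m)) [:of_int m * (al + 1/2), 1:]) \<and>
  (\<forall>k. odd k \<longrightarrow> i k = [:- 2 * s powi k * al:]) \<and>
  (\<forall>k. odd k \<longrightarrow> j k = [:s powi k * (1 - 2 * al):])"
  using sgnz gF hF aF bF iF jF by blast

end


lemma lin_intro:
  assumes "vector_space s1" "vector_space s2" "\<And>x y. f (x + y) = f x + f y" "\<And>c x. f (s1 c x) = s2 c (f x)"
  shows "Vector_Spaces.linear s1 s2 f"
  using assms unfolding Vector_Spaces.linear_def module_hom_def module_hom_axioms_def module_iff_vector_space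
  by auto

lemma vsN: "vector_space Nsc"
proof
  fix a b :: complex and x y :: "complex poly \<times> complex poly"
  show "Nsc a (x + y) = Nsc a x + Nsc a y" by (cases x, cases y) (simp add: Nsc_def smult_add_right)
  show "Nsc (a + b) x = Nsc a x + Nsc b x" by (cases x) (simp add: Nsc_def smult_add_left)
  show "Nsc a (Nsc b x) = Nsc (a * b) x" by (cases x) (simp add: Nsc_def)
  show "Nsc 1 x = x" by (cases x) (simp add: Nsc_def)
qed

locale tm2 = tmf +
  fixes e0
  assumes e0V: "e0 \<in> V0" and e0nz: "e0 \<noteq> 0"
    and gen0: "\<And>v. v \<in> V0 \<Longrightarrow> \<exists>f. v = P f e0"
    and gen1: "\<And>v. v \<in> V1 \<Longrightarrow> \<exists>f. v = P f (G 0 e0)"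
begin

definition e1 where "e1 = G 0 e0"

lemma e1V: "e1 \<in> V1" unfolding e1_def by (rule invG0[OF e0V])
lemma e1nz: "e1 \<noteq> 0" unfolding e1_def using G0_inj e0nz by blast
lemma gen1': "v \<in> V1 \<Longrightarrow> \<exists>f. v = P f e1" unfolding e1_def by (rule gen1)

definition c0 where "c0 v = (SOME f. v = P f e0)"
definition c1 where "c1 v = (SOME f. v = P f e1)"

lemma c0: "v \<in> V0 \<Longrightarrow> v = P (c0 v) e0"
  unfolding c0_def by (rule someI_ex) (rule gen0)
lemma c1: "v \<in> V1 \<Longrightarrow> v = P (c1 v) e1"
  unfolding c1_def by (rule someI_ex) (rule gen1')

lemma inj0: "P f e0 = P f' e0 \<Longrightarrow> f = f'" using P_inj e0nz by blast
lemma inj1: "P f e1 = P f' e1 \<Longrightarrow> f = f'" using P_inj e1nz by blast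

definition "ca m = c0 (L m e0)"
definition "cb m = c1 (L m e1)"
definition "cg k = c1 (G k e0)"
definition "ch k = c0 (G k e1)"
definition "ci k = c0 (I k e0)"
definition "cj k = c1 (I k e1)"

lemma La: "L m e0 = P (ca m) e0" unfolding ca_def by (rule c0) (rule invL0[OF e0V])
lemma Lb: "L m e1 = P (cb m) e1" unfolding cb_def by (rule c1) (rule invL1[OF e1V])
lemma Gg: "G k e0 = P (cg k) e1" unfolding cg_def by (rule c1) (rule invG0[OF e0V])
lemma Gh: "G k e1 = P (ch k) e0" unfolding ch_def by (rule c0) (rule invG1[OF e1V])
lemma Ii: "odd k \<Longrightarrow> I k e0 = P (ci k) e0" unfolding ci_def by (rule c0) (rule invI0[OF _ e0V])
lemma Ij: "odd k \<Longrightarrow> I k e1 = P (cj k) e1" unfolding cj_def by (rule c1) (rule invI1[OF _ e1V])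

lemma L0a: "L m (P f e0) = P (pshift f (of_int m) * ca m) e0"
  by (simp add: L_P La PA_mult)
lemma L1b: "L m (P f e1) = P (pshift f (of_int m) * cb m) e1"
  by (simp add: L_P Lb PA_mult)
lemma G0g: "G k (P f e0) = P (pshift f (of_int k / 2) * cg k) e1"
  by (simp add: G_P Gg PA_mult)
lemma G1h: "G k (P f e1) = P (pshift f (of_int k / 2) * ch k) e0"
  by (simp add: G_P Gh PA_mult)
lemma I0i: "odd k \<Longrightarrow> I k (P f e0) = P (pshift f (of_int k / 2) * ci k) e0"
  by (simp add: I_P Ii PA_mult)
lemma I1j: "odd k \<Longrightarrow> I k (P f e1) = P (pshift f (of_int k / 2) * cj k) e1"
  by (simp add: I_P Ij PA_mult)

lemma Ge1: "G 0 e1 = P [:0,1:] e0" by (simp add: e1_def GG0 PX)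

lemma cg0: "cg 0 = 1"
proof (rule inj1)
  have "P (cg 0) e1 = G 0 e0" by (rule Gg[symmetric])
  also have "\<dots> = e1" by (rule e1_def[symmetric])
  also have "\<dots> = P 1 e1" by simp
  finally show "P (cg 0) e1 = P 1 e1" .
qed

lemma G0e0: "G 0 e0 = e1" by (rule e1_def[symmetric])
lemma ch0: "ch 0 = [:0,1:]"
  by (rule inj0) (simp add: Gh[symmetric] Ge1)

lemma hlp: assumes "P X v + P X v = sc (c * 2) (P Y v)" "v \<noteq> 0" shows "X = smult c Y"
proof -
  have "P X v + P X v = sc 2 (sc c (P Y v))" using assms(1) by (simp add: mult.commute)
  then have "P X v = sc c (P Y v)" by (rule half2)
  then have "P X v = P (smult c Y) v" by (simp add: PA_smult)
  then show ?thesis using P_inj assms(2) by blast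
qed

lemma sm_inv: "a = smult ((-1::complex) powi k) X \<Longrightarrow> X = smult ((-1) powi k) a"
  by simp

lemma R1a: "ca k = smult ((-1) powi k) (pshift (cg k) (of_int k/2) * ch k)"
proof -
  have "G k (G k e0) + G k (G k e0) = sc ((-1) powi k * 2) (L ((k + k) div 2) e0)" by (rule cGGe) simp
  then have "P (pshift (cg k) (of_int k/2) * ch k) e0 + P (pshift (cg k) (of_int k/2) * ch k) e0
      = sc ((-1) powi k * 2) (P (ca k) e0)" by (simp add: Gg G1h La)
  then have "pshift (cg k) (of_int k/2) * ch k = smult ((-1) powi k) (ca k)" using e0nz by (rule hlp)
  then show ?thesis by (rule sm_inv)
qed

lemma R1b: "cb k = smult ((-1) powi k) (pshift (ch k) (of_int k/2) * cg k)"
proof -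
  have "G k (G k e1) + G k (G k e1) = sc ((-1) powi k * 2) (L ((k + k) div 2) e1)" by (rule cGGe) simp
  then have "P (pshift (ch k) (of_int k/2) * cg k) e1 + P (pshift (ch k) (of_int k/2) * cg k) e1
      = sc ((-1) powi k * 2) (P (cb k) e1)" by (simp add: Gh G0g Lb)
  then have "pshift (ch k) (of_int k/2) * cg k = smult ((-1) powi k) (cb k)" using e1nz by (rule hlp)
  then show ?thesis by (rule sm_inv)
qed

lemma PXs: "P (smult c [:0,1:]) v = sc c (L 0 v)" by (simp only: PA_smult PX)

lemma R2a: "pshift (cg (-k)) (of_int k/2) * ch k + pshift (cg k) (of_int (-k)/2) * ch (-k) = smult ((-1) powi k * 2) [:0,1:]"
proof (rule inj0)
  have h: "G k (G (-k) e0) + G (-k) (G k e0) = sc ((-1) powi k * 2) (L ((k + -k) div 2) e0)" by (rule cGGe) simp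
  have l1: "G k (G (-k) e0) = P (pshift (cg (-k)) (of_int k/2) * ch k) e0" by (simp only: Gg G1h)
  have l2: "G (-k) (G k e0) = P (pshift (cg k) (of_int (-k)/2) * ch (-k)) e0" by (simp only: Gg G1h)
  show "P (pshift (cg (-k)) (of_int k/2) * ch k + pshift (cg k) (of_int (-k)/2) * ch (-k)) e0 =
    P (smult ((-1) powi k * 2) [:0,1:]) e0"
    using h unfolding l1 l2 PA_add[symmetric] PXs by simp
qed

lemma R2b: "pshift (ch (-k)) (of_int k/2) * cg k + pshift (ch k) (of_int (-k)/2) * cg (-k) = smult ((-1) powi k * 2) [:0,1:]"
proof (rule inj1)
  have h: "G k (G (-k) e1) + G (-k) (G k e1) = sc ((-1) powi k * 2) (L ((k + -k) div 2) e1)" by (rule cGGe) simp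
  have l1: "G k (G (-k) e1) = P (pshift (ch (-k)) (of_int k/2) * cg k) e1" by (simp only: Gh G0g)
  have l2: "G (-k) (G k e1) = P (pshift (ch k) (of_int (-k)/2) * cg (-k)) e1" by (simp only: Gh G0g)
  show "P (pshift (ch (-k)) (of_int k/2) * cg k + pshift (ch k) (of_int (-k)/2) * cg (-k)) e1 =
    P (smult ((-1) powi k * 2) [:0,1:]) e1"
    using h unfolding l1 l2 PA_add[symmetric] PXs by simp
qed

lemma R3a: "cb m - ca m = smult (of_int m / 2) (cg (2*m))"
proof (rule inj1)
  have h: "L m (G 0 e0) - G 0 (L m e0) = sc (of_int (m - 0) / 2) (G (2 * m + 0) e0)" by (rule cLG)
  have l1: "L m (G 0 e0) = P (cb m) e1" by (simp only: G0e0 Lb)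
  have l2: "G 0 (L m e0) = P (ca m) e1" by (simp only: La G0_P G0e0)
  have l3: "G (2 * m + 0) e0 = P (cg (2*m)) e1" by (simp add: Gg)
  show "P (cb m - ca m) e1 = P (smult (of_int m / 2) (cg (2*m))) e1"
    using h unfolding l1 l2 l3 PA_diff PA_smult by simp
qed

lemma R3b: "pshift [:0,1:] (of_int m) * ca m - cb m * [:0,1:] = smult (of_int m/2) (ch (2*m))"
proof (rule inj0)
  have h: "L m (G 0 e1) - G 0 (L m e1) = sc (of_int (m - 0) / 2) (G (2 * m + 0) e1)" by (rule cLG)
  have l1: "L m (G 0 e1) = P (pshift [:0,1:] (of_int m) * ca m) e0" by (simp only: Ge1 L0a)
  have l2: "G 0 (L m e1) = P (cb m * [:0,1:]) e0" by (simp only: Lb G0_P Ge1 PA_mult)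
  have l3: "G (2 * m + 0) e1 = P (ch (2*m)) e0" by (simp add: Gh)
  show "P (pshift [:0,1:] (of_int m) * ca m - cb m * [:0,1:]) e0 = P (smult (of_int m / 2) (ch (2*m))) e0"
    using h unfolding l1 l2 l3 PA_diff PA_smult by simp
qed

lemma R4a: "pshift (cg k) (of_int m) * cb m - pshift (ca m) (of_int k/2) * cg k = smult (of_int (m-k)/2) (cg (2*m+k))"
proof (rule inj1)
  have h: "L m (G k e0) - G k (L m e0) = sc (of_int (m - k) / 2) (G (2 * m + k) e0)" by (rule cLG)
  have l1: "L m (G k e0) = P (pshift (cg k) (of_int m) * cb m) e1" by (simp only: Gg L1b)
  have l2: "G k (L m e0) = P (pshift (ca m) (of_int k/2) * cg k) e1" by (simp only: La G0g)
  have l3: "G (2 * m + k) e0 = P (cg (2*m+k)) e1" by (rule Gg)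
  show "P (pshift (cg k) (of_int m) * cb m - pshift (ca m) (of_int k/2) * cg k) e1 = P (smult (of_int (m-k)/2) (cg (2*m+k))) e1"
    using h unfolding l1 l2 l3 PA_diff PA_smult by simp
qed

lemma R4b: "pshift (ch k) (of_int m) * ca m - pshift (cb m) (of_int k/2) * ch k = smult (of_int (m-k)/2) (ch (2*m+k))"
proof (rule inj0)
  have h: "L m (G k e1) - G k (L m e1) = sc (of_int (m - k) / 2) (G (2 * m + k) e1)" by (rule cLG)
  have l1: "L m (G k e1) = P (pshift (ch k) (of_int m) * ca m) e0" by (simp only: Gh L0a)
  have l2: "G k (L m e1) = P (pshift (cb m) (of_int k/2) * ch k) e0" by (simp only: Lb G1h)
  have l3: "G (2 * m + k) e1 = P (ch (2*m+k)) e0" by (rule Gh)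
  show "P (pshift (ch k) (of_int m) * ca m - pshift (cb m) (of_int k/2) * ch k) e0 = P (smult (of_int (m-k)/2) (ch (2*m+k))) e0"
    using h unfolding l1 l2 l3 PA_diff PA_smult by simp
qed

lemma coefo: "((-1::complex) powi (0 + 1) * (of_int (0 - k) / 2)) = of_int k / 2" by simp

lemma R5a: assumes k: "odd k" shows "cg k * [:0,1:] + ch k = smult (of_int k/2) (ci k)"
proof (rule inj0)
  have h: "G 0 (G k e0) + G k (G 0 e0) = sc ((-1) powi (0 + 1) * (of_int (0 - k) / 2)) (I (0 + k) e0)"
    by (rule cGGo) (simp add: k)
  have l1: "G 0 (G k e0) = P (cg k * [:0,1:]) e0" by (simp only: Gg G0_P Ge1 PA_mult)
  have l2: "G k (G 0 e0) = P (ch k) e0" by (simp only: G0e0 Gh)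
  have l3: "I (0 + k) e0 = P (ci k) e0" using Ii[OF k] by simp
  show "P (cg k * [:0,1:] + ch k) e0 = P (smult (of_int k/2) (ci k)) e0"
    using h unfolding l1 l2 l3 coefo PA_add PA_smult by simp
qed

lemma R5b: assumes k: "odd k" shows "ch k + pshift [:0,1:] (of_int k/2) * cg k = smult (of_int k/2) (cj k)"
proof (rule inj1)
  have h: "G 0 (G k e1) + G k (G 0 e1) = sc ((-1) powi (0 + 1) * (of_int (0 - k) / 2)) (I (0 + k) e1)"
    by (rule cGGo) (simp add: k)
  have l1: "G 0 (G k e1) = P (ch k) e1" by (simp only: Gh G0_P G0e0)
  have l2: "G k (G 0 e1) = P (pshift [:0,1:] (of_int k/2) * cg k) e1" by (simp only: Ge1 G0g)
  have l3: "I (0 + k) e1 = P (cj k) e1" using Ij[OF k] by simp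
  show "P (ch k + pshift [:0,1:] (of_int k/2) * cg k) e1 = P (smult (of_int k/2) (cj k)) e1"
    using h unfolding l1 l2 l3 coefo PA_add PA_smult by simp
qed

lemma R6: "pshift (ci (-1)) (1/2) * ci 1 = pshift (ci 1) (-1/2) * ci (-1)"
proof -
  have h: "I 1 (I (-1) e0) - I (-1) (I 1 e0) = 0" by (rule cII) auto
  have o1: "odd (1::int)" "odd (-1::int)" by simp_all
  have l1: "I 1 (I (-1) e0) = P (pshift (ci (-1)) (of_int 1 / 2) * ci 1) e0"
    by (simp only: Ii[OF o1(2)] I0i[OF o1(1)])
  have l2: "I (-1) (I 1 e0) = P (pshift (ci 1) (of_int (-1) / 2) * ci (-1)) e0"
    by (simp only: Ii[OF o1(1)] I0i[OF o1(2)])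
  have "P (pshift (ci (-1)) (of_int 1 / 2) * ci 1) e0 = P (pshift (ci 1) (of_int (-1) / 2) * ci (-1)) e0"
    using h unfolding l1 l2 by simp
  then have "pshift (ci (-1)) (of_int 1 / 2) * ci 1 = pshift (ci 1) (of_int (-1) / 2) * ci (-1)" by (rule inj0)
  then show ?thesis by simp
qed

sublocale pr ca cb cg ch ci cj
  by (unfold_locales) (fact cg0 ch0 R1a R1b R2a R2b R3a R3b R4a R4b R5a R5b R6)+

lemma smc: "p * smult c q = smult c (q * (p :: complex poly))" by (simp add: mult.commute)
lemma pcc: "p * [:c:] = smult c (p :: complex poly)" by (simp add: mult.commute)

definition psi where "psi z = P (fst z) e0 + P (snd z) e1"

lemma psi_pair: "psi (f, g) = P f e0 + P g e1" by (simp add: psi_def)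

lemma psi_add: "psi (z + z') = psi z + psi z'"
  by (simp add: psi_def PA_add algebra_simps)

lemma psi_scale: "psi (Nsc c z) = sc c (psi z)"
  by (cases z) (simp add: psi_def Nsc_def PA_smult scale_right_distrib)

lemma psi_inj: "inj psi"
proof (rule injI)
  fix x y assume h: "psi x = psi y"
  obtain f g where x: "x = (f, g)" by (cases x)
  obtain f' g' where y: "y = (f', g')" by (cases y)
  have "(P f e0 - P f' e0) + (P g e1 - P g' e1) = 0" using h by (simp add: x y psi_def algebra_simps)
  moreover have "P f e0 - P f' e0 \<in> V0" by (intro sub_diff[OF sub0] P0 e0V)
  moreover have "P g e1 - P g' e1 \<in> V1" by (intro sub_diff[OF sub1] P1 e1V)
  ultimately have "P f e0 - P f' e0 = 0" "P g e1 - P g' e1 = 0" using split0 by blast+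
  then have "f = f'" "g = g'" using inj0 inj1 by auto
  then show "x = y" by (simp add: x y)
qed

lemma psi_surj: "surj psi"
proof -
  have "v \<in> range psi" for v
  proof -
    obtain a b where ab: "a \<in> V0" "b \<in> V1" "v = a + b" using dec[of v] by blast
    obtain f where f: "a = P f e0" using gen0[OF ab(1)] by blast
    obtain g where g: "b = P g e1" using gen1'[OF ab(2)] by blast
    have "v = psi (f, g)" by (simp add: psi_pair ab(3) f g)
    then show ?thesis by blast
  qed
  then show ?thesis by blast
qed

lemma psi_bij: "bij psi" using psi_inj psi_surj by (simp add: bij_def)

lemma inter: assumes "\<And>z. psi (T' z) = T (psi z)" shows "inv psi (T v) = T' (inv psi v)"
proof -
  have "T v = T (psi (inv psi v))" by (simp add: surj_f_inv_f[OF psi_surj])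
  also have "\<dots> = psi (T' (inv psi v))" by (simp add: assms)
  finally show ?thesis by (simp add: inv_f_f[OF psi_inj])
qed

lemma phi_lin: "Vector_Spaces.linear sc Nsc (inv psi)"
proof (rule lin_intro[OF vsp vsN])
  fix x y
  have "psi (inv psi x + inv psi y) = x + y" by (simp add: psi_add surj_f_inv_f[OF psi_surj])
  then show "inv psi (x + y) = inv psi x + inv psi y" by (metis inv_f_f[OF psi_inj])
next
  fix c x
  have "psi (Nsc c (inv psi x)) = sc c x" by (simp add: psi_scale surj_f_inv_f[OF psi_surj])
  then show "inv psi (sc c x) = Nsc c (inv psi x)" by (metis inv_f_f[OF psi_inj])
qed

lemma phi_V0: "inv psi ` V0 = Neven"
proof
  show "inv psi ` V0 \<subseteq> Neven"
  proof
    fix y assume "y \<in> inv psi ` V0"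
    then obtain v where v: "v \<in> V0" "y = inv psi v" by blast
    obtain f where f: "v = P f e0" using gen0[OF v(1)] by blast
    have "v = psi (f, 0)" by (simp add: psi_pair f)
    then have "y = (f, 0)" by (simp add: v(2) inv_f_f[OF psi_inj])
    then show "y \<in> Neven" by (simp add: Neven_def)
  qed
  show "Neven \<subseteq> inv psi ` V0"
  proof
    fix y assume "y \<in> Neven"
    then obtain f where y: "y = (f, 0)" by (auto simp: Neven_def)
    have "psi y \<in> V0" by (simp add: y psi_pair P0 e0V)
    moreover have "y = inv psi (psi y)" by (simp add: inv_f_f[OF psi_inj])
    ultimately show "y \<in> inv psi ` V0" by blast
  qed
qed

lemma phi_V1: "inv psi ` V1 = Nodd"
proof
  show "inv psi ` V1 \<subseteq> Nodd"
  proof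
    fix y assume "y \<in> inv psi ` V1"
    then obtain v where v: "v \<in> V1" "y = inv psi v" by blast
    obtain g where g: "v = P g e1" using gen1'[OF v(1)] by blast
    have "v = psi (0, g)" by (simp add: psi_pair g)
    then have "y = (0, g)" by (simp add: v(2) inv_f_f[OF psi_inj])
    then show "y \<in> Nodd" by (simp add: Nodd_def)
  qed
  show "Nodd \<subseteq> inv psi ` V1"
  proof
    fix y assume "y \<in> Nodd"
    then obtain g where y: "y = (0, g)" by (auto simp: Nodd_def)
    have "psi y \<in> V1" by (simp add: y psi_pair P1 e1V)
    moreover have "y = inv psi (psi y)" by (simp add: inv_f_f[OF psi_inj])
    ultimately show "y \<in> inv psi ` V1" by blast
  qed
qed

lemma psi_NL:
  assumes A: "\<And>m. ca m = smult (lampow lm (2*m)) [:of_int m * aa, 1:]"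
    and B: "\<And>m. cb m = smult (lampow lm (2*m)) [:of_int m * (aa + 1/2), 1:]"
  shows "psi (NL lm aa m z) = L m (psi z)"
proof -
  obtain f g where z: "z = (f, g)" by (cases z)
  have "L m (psi z) = P (pshift f (of_int m) * ca m) e0 + P (pshift g (of_int m) * cb m) e1"
    by (simp add: z psi_pair lin_add[OF linL] L0a L1b)
  also have "\<dots> = psi (NL lm aa m z)"
    by (simp only: A B smc) (simp add: z psi_pair NL_def)
  finally show ?thesis by simp
qed

lemma psi_NI:
  assumes k: "odd k"
    and A: "ci k = [:- 2 * (t powi k) * lampow lm k * aa:]"
    and B: "cj k = [:(t powi k) * lampow lm k * (1 - 2 * aa):]"
  shows "psi (NI t lm aa k z) = I k (psi z)"
proof -
  obtain f g where z: "z = (f, g)" by (cases z)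
  have "I k (psi z) = P (pshift f (of_int k / 2) * ci k) e0 + P (pshift g (of_int k / 2) * cj k) e1"
    by (simp add: z psi_pair lin_add[OF linI[OF k]] I0i[OF k] I1j[OF k])
  also have "\<dots> = psi (NI t lm aa k z)"
    by (simp only: A B pcc) (simp add: z psi_pair NI_def)
  finally show ?thesis by simp
qed

lemma psi_NG:
  assumes A: "cg k = [:(t powi k) * lampow lm k:]"
    and B: "ch k = smult (((- t) powi k) * lampow lm k) [:of_int k * aa, 1:]"
  shows "psi (NG t lm aa k z) = G k (psi z)"
proof -
  obtain f g where z: "z = (f, g)" by (cases z)
  have "G k (psi z) = P (pshift g (of_int k / 2) * ch k) e0 + P (pshift f (of_int k / 2) * cg k) e1"
    by (simp add: z psi_pair lin_add[OF linG] G0g G1h add.commute)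
  also have "\<dots> = psi (NG t lm aa k z)"
    by (simp only: A B pcc smc) (simp add: z psi_pair NG_def)
  finally show ?thesis by simp
qed

end


context tm2
begin

theorem main2: "\<exists>lam al t. lam \<noteq> 0 \<and> (t = 1 \<or> t = -1) \<and>
   tiso sc V0 V1 L I G Nsc Neven Nodd (NL lam al) (NI t lam al) (NG t lam al)"
proof -
  obtain s aa where s: "s \<noteq> 0" and
    g: "\<And>k. cg k = [:s powi k:]" and
    h: "\<And>k. ch k = smult ((-1) powi k * s powi k) [:of_int k * aa, 1:]" and
    a: "\<And>m. ca m = smult (s powi (2*m)) [:of_int m * aa, 1:]" and
    b: "\<And>m. cb m = smult (s powi (2*m)) [:of_int m * (aa + 1/2), 1:]" and
    i: "\<And>k. odd k \<Longrightarrow> ci k = [:- 2 * s powi k * aa:]" and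
    j: "\<And>k. odd k \<Longrightarrow> cj k = [:s powi k * (1 - 2 * aa):]"
    using pr_final by blast
  define lm where "lm = s * s"
  define r where "r = csqrt lm"
  define t :: complex where "t = (if r = s then 1 else -1)"
  have lam0: "lm \<noteq> 0" using s by (simp add: lm_def)
  have rr: "r * r = lm" using power2_csqrt[of lm] by (simp add: r_def power2_eq_square)
  have "(r - s) * (r + s) = 0" using rr by (simp add: lm_def algebra_simps)
  then have rs: "r = s \<or> r = - s" by (simp add: eq_neg_iff_add_eq_0)
  have tr: "t * r = s" using rs s by (auto simp: t_def)
  have t1: "t = 1 \<or> t = -1" by (simp add: t_def)
  have lp: "lampow lm k = r powi k" for k by (simp add: lampow_def r_def)
  have k1: "t powi k * lampow lm k = s powi k" for k
    using tr by (simp add: lp flip: power_int_mult_distrib)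
  have k2: "lampow lm (2*m) = s powi (2*m)" for m
  proof -
    have "lampow lm (2*m) = (r powi 2) powi m" by (simp add: lp power_int_mult)
    also have "\<dots> = lm powi m" using rr by (simp add: power2_eq_square)
    also have "\<dots> = (s powi 2) powi m" by (simp add: lm_def power2_eq_square)
    also have "\<dots> = s powi (2*m)" by (simp add: power_int_mult)
    finally show ?thesis .
  qed
  have k3: "(- t) powi k * lampow lm k = (-1) powi k * s powi k" for k
  proof -
    have "(- t) powi k = (-1) powi k * t powi k" by (simp add: power_int_minus_left)
    then show ?thesis using k1[of k] by (simp add: mult.assoc)
  qed
  have A: "ca m = smult (lampow lm (2*m)) [:of_int m * aa, 1:]" for m by (simp add: a k2)
  have B: "cb m = smult (lampow lm (2*m)) [:of_int m * (aa + 1/2), 1:]" for m by (simp add: b k2)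
  have Ci: "ci k = [:- 2 * (t powi k) * lampow lm k * aa:]" if "odd k" for k
    using i[OF that] k1[of k] by (simp add: mult.assoc)
  have Cj: "cj k = [:(t powi k) * lampow lm k * (1 - 2 * aa):]" if "odd k" for k
    using j[OF that] k1[of k] by simp
  have Cg: "cg k = [:(t powi k) * lampow lm k:]" for k using g[of k] k1[of k] by simp
  have Ch: "ch k = smult (((- t) powi k) * lampow lm k) [:of_int k * aa, 1:]" for k using h[of k] k3[of k] by simp
  have "tiso sc V0 V1 L I G Nsc Neven Nodd (NL lm aa) (NI t lm aa) (NG t lm aa)"
    unfolding tiso_def
  proof (rule exI[of _ "inv psi"], intro conjI allI impI)
    show "Vector_Spaces.linear sc Nsc (inv psi)" by (rule phi_lin)
    show "bij (inv psi)" by (rule bij_imp_bij_inv[OF psi_bij])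
    show "inv psi ` V0 = Neven" by (rule phi_V0)
    show "inv psi ` V1 = Nodd" by (rule phi_V1)
    fix m v show "inv psi (L m v) = NL lm aa m (inv psi v)"
      by (rule inter) (rule psi_NL[OF A B])
  next
    fix k :: int and v assume k: "odd k"
    show "inv psi (I k v) = NI t lm aa k (inv psi v)"
      by (rule inter) (rule psi_NI[OF k Ci[OF k] Cj[OF k]])
  next
    fix k :: int and v show "inv psi (G k v) = NG t lm aa k (inv psi v)"
      by (rule inter) (rule psi_NG[OF Cg Ch])
  qed
  then show ?thesis using lam0 t1 by blast
qed

end

theorem theorem4p3:
  fixes sc :: "complex \<Rightarrow> 'v::ab_group_add \<Rightarrow> 'v"
    and V0 V1 :: "'v set"
    and L I G :: "int \<Rightarrow> 'v \<Rightarrow> 'v"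
  assumes "tmod sc V0 V1 L I G"
    and "free_rank2_L0 sc L"
  shows "\<exists>lam al t. lam \<noteq> 0 \<and> (t = 1 \<or> t = -1) \<and>
           (tiso sc V0 V1 L I G Nsc Neven Nodd (NL lam al) (NI t lam al) (NG t lam al) \<or>
            tiso sc V1 V0 L I G Nsc Neven Nodd (NL lam al) (NI t lam al) (NG t lam al))"
proof -
  interpret T0: tmf sc V0 V1 L I G
    by (intro tmf.intro tm.intro tmf_axioms.intro assms)
  interpret T1: tmf sc V1 V0 L I G
    by (intro tmf.intro tm.intro tmf_axioms.intro assms tmod_swap)
  obtain e0 where e0: "e0 \<in> V0" "e0 \<noteq> 0" "\<And>v. v \<in> V0 \<Longrightarrow> \<exists>f. v = T0.P f e0"
    using T0.cyclic0 by blast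
  obtain e1 where e1: "e1 \<in> V1" "e1 \<noteq> 0" "\<And>v. v \<in> V1 \<Longrightarrow> \<exists>f. v = T0.P f e1"
    using T1.cyclic0 by blast
  obtain gp where gp: "G 0 e0 = T0.P gp e1" using e1(3)[OF T0.invG0[OF e0(1)]] by blast
  obtain hp where hp: "G 0 e1 = T0.P hp e0" using e0(3)[OF T0.invG1[OF e1(1)]] by blast
  have "T0.P (gp * hp) e0 = G 0 (G 0 e0)" by (simp add: gp T0.G0_P hp T0.PA_mult)
  also have "\<dots> = T0.P [:0,1:] e0" by (simp add: T0.GG0 T0.PX)
  finally have gh: "gp * hp = [:0,1:]" using T0.P_inj e0(2) by blast
  have gh0: "gp \<noteq> 0" "hp \<noteq> 0" using gh by auto
  have "degree (gp * hp) = 1" using gh by simp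
  then have "degree gp + degree hp = 1" using gh0 by (simp add: degree_mult_eq)
  then have "degree gp = 0 \<or> degree hp = 0" by auto
  then show ?thesis
  proof
    assume dg: "degree gp = 0"
    then obtain c where c: "gp = [:c:]" by (metis degree_eq_zeroE)
    then have c0: "c \<noteq> 0" using gh0 by auto
    have ge: "G 0 e0 = sc c e1" using gp c by simp
    interpret M: tm2 sc V0 V1 L I G e0
    proof (intro tm2.intro tm2_axioms.intro)
      show "tmf sc V0 V1 L I G" by (intro tmf.intro tm.intro tmf_axioms.intro assms)
      show "e0 \<in> V0" "e0 \<noteq> 0" by (fact e0)+
      show "\<And>v. v \<in> V0 \<Longrightarrow> \<exists>f. v = T0.P f e0" by (fact e0(3))
      fix v assume "v \<in> V1"
      then obtain f where f: "v = T0.P f e1" using e1(3) by blast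
      have "T0.P (smult (1/c) f) (G 0 e0) = T0.P f e1" using c0 by (simp add: ge T0.PA_scale_vec T0.PA_smult)
      then show "\<exists>f. v = T0.P f (G 0 e0)" using f by metis
    qed
    from M.main2 show ?thesis by blast
  next
    assume dh: "degree hp = 0"
    then obtain c where c: "hp = [:c:]" by (metis degree_eq_zeroE)
    then have c0: "c \<noteq> 0" using gh0 by auto
    have he: "G 0 e1 = sc c e0" using hp c by simp
    interpret M: tm2 sc V1 V0 L I G e1
    proof (intro tm2.intro tm2_axioms.intro)
      show "tmf sc V1 V0 L I G" by (intro tmf.intro tm.intro tmf_axioms.intro assms tmod_swap)
      show "e1 \<in> V1" "e1 \<noteq> 0" by (fact e1)+
      show "\<And>v. v \<in> V1 \<Longrightarrow> \<exists>f. v = T0.P f e1" by (fact e1(3))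
      fix v assume "v \<in> V0"
      then obtain f where f: "v = T0.P f e0" using e0(3) by blast
      have "T0.P (smult (1/c) f) (G 0 e1) = T0.P f e0" using c0 by (simp add: he T0.PA_scale_vec T0.PA_smult)
      then show "\<exists>f. v = T0.P f (G 0 e1)" using f by metis
    qed
    from M.main2 show ?thesis by blast
  qed
qed

end
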